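(* Let $W$ be the affine Weyl group of an irreducible reduced crystallographic root system of rank 2, with simple generators $s_0,s_1,s_2$ and $W_0=\langle s_1,s_2\rangle$. Let $H_{r_0}$, $H_{r_1}$ be two adjacent parallel hyperplanes (i.e. $H_{\alpha,c}$ and $H_{\alpha,c+1}$ for a root $\alpha$ and $c\in\mathbb{Z}$). If both the alcove $w\in W$ and the identity alcove lie in the strip between $H_{r_0}$ and $H_{r_1}$, then $w$ is not the element of maximal length in the coset $wW_0$.
   Context: $W$ is generated by the reflections $s_{\beta;k}$ in the lines $H_{\beta,k}=\{v:\langle v,\beta\rangle=k\}$ ($\beta$ a root, $k\in\mathbb{Z}$) of a Euclidean plane; as a Coxeter group its simple generators $s_0,s_1,s_2$ are the reflections in the walls of the fundamental alcove $A_0$, with $s_0$ the reflection in the wall not through the origin; $W_0=\langle s_1,s_2\rangle$ is the finite Weyl group. Elements are identified with alcoves via $w\mapsto wA_0$. $\ell$ is Coxeter length. *)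

theory Defs
  imports "HOL-Analysis.Analysis"
begin

definition root_system :: "(real^2) set \<Rightarrow> bool" where
  "root_system R \<longleftrightarrow>
     finite R \<and> 0 \<notin> R \<and> span R = UNIV \<and>
     (\<forall>a\<in>R. \<forall>b\<in>R. b - (2 * (b \<bullet> a) / (a \<bullet> a)) *\<^sub>R a \<in> R) \<and>
     (\<forall>a\<in>R. \<forall>b\<in>R. 2 * (b \<bullet> a) / (a \<bullet> a) \<in> \<int>)"

definition reduced_rs :: "(real^2) set \<Rightarrow> bool" where
  "reduced_rs R \<longleftrightarrow> (\<forall>a\<in>R. \<forall>c::real. c *\<^sub>R a \<in> R \<longrightarrow> c = 1 \<or> c = -1)"

definition irreducible_rs :: "(real^2) set \<Rightarrow> bool" where
  "irreducible_rs R \<longleftrightarrow> \<not> (\<exists>R1 R2. R1 \<noteq> {} \<and> R2 \<noteq> {} \<and> R1 \<union> R2 = R \<and> R1 \<inter> R2 = {} \<and>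
        (\<forall>a\<in>R1. \<forall>b\<in>R2. a \<bullet> b = 0))"

definition aff_refl :: "real^2 \<Rightarrow> int \<Rightarrow> real^2 \<Rightarrow> real^2" where
  "aff_refl b k v = v - ((v \<bullet> b - of_int k) * 2 / (b \<bullet> b)) *\<^sub>R b"

text \<open>Monoid generated by a set of maps (for sets of involutions this is the generated group).\<close>
inductive_set gen_by :: "((real^2 \<Rightarrow> real^2) set) \<Rightarrow> (real^2 \<Rightarrow> real^2) set"
  for S where
  gen_id: "id \<in> gen_by S"
| gen_step: "s \<in> S \<Longrightarrow> g \<in> gen_by S \<Longrightarrow> s \<circ> g \<in> gen_by S"

definition affW :: "(real^2) set \<Rightarrow> (real^2 \<Rightarrow> real^2) set" where
  "affW R = gen_by {aff_refl b k | b k. b \<in> R}"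

definition pos_roots :: "(real^2) set \<Rightarrow> real^2 \<Rightarrow> (real^2) set" where
  "pos_roots R xi = {b \<in> R. b \<bullet> xi > 0}"

definition A0 :: "(real^2) set \<Rightarrow> real^2 \<Rightarrow> (real^2) set" where
  "A0 R xi = {v. \<forall>b\<in>pos_roots R xi. 0 < v \<bullet> b \<and> v \<bullet> b < 1}"

definition is_wall :: "(real^2) set \<Rightarrow> real^2 \<Rightarrow> int \<Rightarrow> bool" where
  "is_wall A b k \<longleftrightarrow> (\<exists>p e. p \<bullet> b = of_int k \<and> e > 0 \<and>
      ({v \<in> ball p e. v \<bullet> b < of_int k} \<subseteq> A \<or> {v \<in> ball p e. v \<bullet> b > of_int k} \<subseteq> A))"

definition simple_gens :: "(real^2) set \<Rightarrow> real^2 \<Rightarrow> (real^2 \<Rightarrow> real^2) set" where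
  "simple_gens R xi = {aff_refl b k | b k. b \<in> R \<and> is_wall (A0 R xi) b k}"

definition W0 :: "(real^2) set \<Rightarrow> real^2 \<Rightarrow> (real^2 \<Rightarrow> real^2) set" where
  "W0 R xi = gen_by {aff_refl b 0 | b. b \<in> R \<and> is_wall (A0 R xi) b 0}"

definition clen :: "(real^2) set \<Rightarrow> real^2 \<Rightarrow> (real^2 \<Rightarrow> real^2) \<Rightarrow> nat" where
  "clen R xi w = (LEAST n. \<exists>ss. length ss = n \<and> set ss \<subseteq> simple_gens R xi \<and> foldr (\<circ>) ss id = w)"

definition strip :: "real^2 \<Rightarrow> int \<Rightarrow> (real^2) set" where
  "strip a c = {v. of_int c < v \<bullet> a \<and> v \<bullet> a < of_int c + 1}"

end

theory Submission
  imports Defs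
begin

definition rf :: "real^2 \<Rightarrow> real \<Rightarrow> real^2 \<Rightarrow> real^2" where
  "rf b k v = v - ((v \<bullet> b - k) * 2 / (b \<bullet> b)) *\<^sub>R b"

lemma aff_refl_rf: "aff_refl b k = rf b (of_int k)"
  by (simp add: fun_eq_iff aff_refl_def rf_def)

definition lin :: "(real^2 \<Rightarrow> real^2) \<Rightarrow> real^2 \<Rightarrow> real^2" where
  "lin g v = g v - g 0"

definition phi :: "(real^2 \<Rightarrow> real^2) \<Rightarrow> (real^2) \<times> real \<Rightarrow> (real^2) \<times> real" where
  "phi g h = (lin g (fst h), snd h + g 0 \<bullet> lin g (fst h))"

definition negp :: "(real^2) \<times> real \<Rightarrow> (real^2) \<times> real" where
  "negp h = (- fst h, - snd h)"

definition rfp :: "(real^2) \<times> real \<Rightarrow> real^2 \<Rightarrow> real^2" where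
  "rfp h = rf (fst h) (snd h)"

definition good :: "(real^2) set \<Rightarrow> (real^2 \<Rightarrow> real^2) \<Rightarrow> bool" where
  "good R g \<longleftrightarrow> orthogonal_transformation (lin g) \<and> lin g ` R = R \<and> (\<forall>c\<in>R. g 0 \<bullet> c \<in> \<int>)"

definition prodl :: "(real^2 \<Rightarrow> real^2) list \<Rightarrow> real^2 \<Rightarrow> real^2" where
  "prodl ss = foldr (\<circ>) ss id"

lemma prodl_Nil[simp]: "prodl [] = id" by (simp add: prodl_def)
lemma prodl_Cons[simp]: "prodl (s # ss) = s \<circ> prodl ss" by (simp add: prodl_def)
lemma foldr_comp_gen: "foldr (\<circ>) ss f = prodl ss \<circ> f"
  by (induction ss) (auto simp: prodl_def)
lemma prodl_append[simp]: "prodl (xs @ ys) = prodl xs \<circ> prodl ys"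
  by (induction xs) auto
lemma prodl_snoc: "prodl (xs @ [s]) = prodl xs \<circ> s" by simp

lemma g_decomp: "g v = lin g v + g 0" by (simp add: lin_def)

lemma rf_inner: "b \<noteq> 0 \<Longrightarrow> rf b k v \<bullet> b = 2 * k - v \<bullet> b"
  by (simp add: rf_def inner_diff_left field_simps)

lemma rf_invol: "b \<noteq> 0 \<Longrightarrow> rf b k (rf b k v) = v"
proof -
  assume b: "b \<noteq> 0"
  have bb: "b \<bullet> b \<noteq> 0" using b by simp
  have e: "((2 * k - v \<bullet> b - k) * 2 / (b \<bullet> b)) = - ((v \<bullet> b - k) * 2 / (b \<bullet> b))"
    using bb by (simp add: field_simps)
  have "rf b k (rf b k v) = rf b k v - ((2 * k - v \<bullet> b - k) * 2 / (b \<bullet> b)) *\<^sub>R b"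
    using rf_inner[OF b] by (simp add: rf_def[of b k "rf b k v"])
  also have "\<dots> = v" unfolding e by (simp add: rf_def)
  finally show ?thesis .
qed

lemma rf_neg: "rf (-b) (-k) = rf b k"
proof
  fix v
  have e: "(v \<bullet> (-b) - -k) * 2 / ((-b) \<bullet> (-b)) = - ((v \<bullet> b - k) * 2 / (b \<bullet> b))"
    by (simp add: minus_divide_left algebra_simps)
  show "rf (-b) (-k) v = rf b k v" unfolding rf_def e by simp
qed

lemma rfp_negp: "rfp (negp h) = rfp h"
  by (simp add: rfp_def negp_def rf_neg)

lemma lin_rf: "lin (rf b k) v = v - (2 * (v \<bullet> b) / (b \<bullet> b)) *\<^sub>R b"
proof -
  have e: "(v \<bullet> b - k) * 2 / (b \<bullet> b) - (0 - k) * 2 / (b \<bullet> b) = 2 * (v \<bullet> b) / (b \<bullet> b)"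
    by (simp add: add_divide_distrib[symmetric] diff_divide_distrib[symmetric] algebra_simps)
  have "lin (rf b k) v = v - (((v \<bullet> b - k) * 2 / (b \<bullet> b) - (0 - k) * 2 / (b \<bullet> b)) *\<^sub>R b)"
    unfolding lin_def rf_def by (simp add: scaleR_diff_left algebra_simps)
  then show ?thesis unfolding e .
qed

lemma rf0: "rf b k 0 = (k * 2 / (b \<bullet> b)) *\<^sub>R b"
  by (simp add: rf_def)

lemma orth_lin_rf: assumes b: "b \<noteq> 0" shows "orthogonal_transformation (lin (rf b k))"
proof -
  have l: "linear (\<lambda>v. v - (2 * (v \<bullet> b) / (b \<bullet> b)) *\<^sub>R b)"
    by (rule linearI) (simp_all add: inner_add_left add_divide_distrib distrib_left scaleR_add_left
         algebra_simps scaleR_diff_right)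
  have bb: "b \<bullet> b \<noteq> 0" using b by simp
  have i: "(v - (2 * (v \<bullet> b) / (b \<bullet> b)) *\<^sub>R b) \<bullet> (w - (2 * (w \<bullet> b) / (b \<bullet> b)) *\<^sub>R b) = v \<bullet> w" for v w
    using bb by (simp add: inner_diff_left inner_diff_right inner_commute field_simps)
  show ?thesis unfolding orthogonal_transformation_def lin_rf using l i by blast
qed


definition below :: "(real^2) set \<Rightarrow> (real^2) \<times> real \<Rightarrow> bool" where
  "below A h \<longleftrightarrow> (\<forall>v\<in>A. v \<bullet> fst h < snd h)"
definition above :: "(real^2) set \<Rightarrow> (real^2) \<times> real \<Rightarrow> bool" where
  "above A h \<longleftrightarrow> (\<forall>v\<in>A. v \<bullet> fst h > snd h)"
definition opp :: "(real^2) set \<Rightarrow> (real^2) set \<Rightarrow> (real^2) \<times> real \<Rightarrow> bool" where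
  "opp A B h \<longleftrightarrow> (below A h \<and> above B h) \<or> (above A h \<and> below B h)"

lemma below_negp: "below A (negp h) \<longleftrightarrow> above A h"
  by (auto simp: below_def above_def negp_def)
lemma above_negp: "above A (negp h) \<longleftrightarrow> below A h"
  by (auto simp: below_def above_def negp_def)
lemma opp_negp: "opp A B (negp h) \<longleftrightarrow> opp A B h"
  by (auto simp: opp_def below_negp above_negp)
lemma opp_sym: "opp A B h \<longleftrightarrow> opp B A h"
  by (auto simp: opp_def)
lemma negp_negp[simp]: "negp (negp h) = h" by (simp add: negp_def)
lemma below_above_ne: "A \<noteq> {} \<Longrightarrow> below A h \<Longrightarrow> above A h \<Longrightarrow> False"
  unfolding below_def above_def by (metis all_not_in_conv less_asym)

lemma lin_comp: "lin (g \<circ> f) = lin g \<circ> lin f" if "linear (lin g)"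
proof
  fix v
  have "lin (g \<circ> f) v = g (f v) - g (f 0)" by (simp add: lin_def)
  also have "\<dots> = lin g (f v) - lin g (f 0)" by (simp add: lin_def)
  also have "\<dots> = lin g (f v - f 0)" using linear_diff[OF that] by simp
  finally show "lin (g \<circ> f) v = (lin g \<circ> lin f) v" by (simp add: lin_def)
qed

lemma lin_id[simp]: "lin id = id" by (simp add: fun_eq_iff lin_def)

locale aw =
  fixes R :: "(real^2) set" and xi :: "real^2"
  assumes rs: "root_system R" and red: "reduced_rs R" and reg: "\<forall>b\<in>R. b \<bullet> xi \<noteq> 0"
begin

lemma finR: "finite R" using rs by (simp add: root_system_def)
lemma nz: "b \<in> R \<Longrightarrow> b \<noteq> 0" using rs by (auto simp: root_system_def)
lemma spanR: "span R = UNIV" using rs by (simp add: root_system_def)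
lemma reflR: "a \<in> R \<Longrightarrow> b \<in> R \<Longrightarrow> b - (2 * (b \<bullet> a) / (a \<bullet> a)) *\<^sub>R a \<in> R"
  using rs by (simp add: root_system_def)
lemma intR: "a \<in> R \<Longrightarrow> b \<in> R \<Longrightarrow> 2 * (b \<bullet> a) / (a \<bullet> a) \<in> \<int>"
  using rs by (simp add: root_system_def)
lemma negR: "b \<in> R \<Longrightarrow> -b \<in> R"
proof -
  assume b: "b \<in> R"
  have "b \<bullet> b \<noteq> 0" using nz[OF b] by simp
  then have "b - (2 * (b \<bullet> b) / (b \<bullet> b)) *\<^sub>R b = b - 2 *\<^sub>R b" by simp
  also have "\<dots> = -b" by (simp add: scaleR_2)
  finally have "b - (2 * (b \<bullet> b) / (b \<bullet> b)) *\<^sub>R b = -b" .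
  then show ?thesis using reflR[OF b b] by metis
qed
lemma redR: "b \<in> R \<Longrightarrow> c *\<^sub>R b \<in> R \<Longrightarrow> c = 1 \<or> c = -1"
  using red by (auto simp: reduced_rs_def)

lemma lin_rf0: "lin (rf b k) = rf b 0"
  by (simp add: fun_eq_iff lin_rf rf_def mult.commute)

lemma good_rf: assumes b: "b \<in> R" and k: "k \<in> \<int>" shows "good R (rf b k)"
proof -
  have o: "orthogonal_transformation (lin (rf b k))" using orth_lin_rf nz[OF b] by blast
  have sub: "rf b 0 ` R \<subseteq> R"
  proof
    fix y assume "y \<in> rf b 0 ` R"
    then obtain c where c: "c \<in> R" "y = rf b 0 c" by auto
    have "rf b 0 c = c - (2 * (c \<bullet> b) / (b \<bullet> b)) *\<^sub>R b" by (simp add: rf_def mult.commute)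
    then show "y \<in> R" using reflR[OF b c(1)] c by simp
  qed
  have "R \<subseteq> rf b 0 ` R"
  proof
    fix c assume c: "c \<in> R"
    have "c = rf b 0 (rf b 0 c)" using rf_invol[OF nz[OF b]] by simp
    moreover have "rf b 0 c \<in> R" using sub c by auto
    ultimately show "c \<in> rf b 0 ` R" by blast
  qed
  with sub have im: "lin (rf b k) ` R = R" unfolding lin_rf0 by blast
  have "rf b k 0 \<bullet> c \<in> \<int>" if c: "c \<in> R" for c
  proof -
    have "rf b k 0 \<bullet> c = k * (2 * (c \<bullet> b) / (b \<bullet> b))" by (simp add: rf0 inner_commute)
    then show ?thesis using Ints_mult[OF k intR[OF b c]] by metis
  qed
  then show ?thesis using o im by (simp add: good_def)
qed

lemma good_aff: "b \<in> R \<Longrightarrow> good R (aff_refl b k)"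
  by (simp add: aff_refl_rf good_rf)

lemma good_id: "good R id"
  unfolding good_def lin_id by (simp add: id_def)

lemma good_orth: "good R g \<Longrightarrow> orthogonal_transformation (lin g)" by (simp add: good_def)
lemma good_lin: "good R g \<Longrightarrow> linear (lin g)" by (simp add: good_def orthogonal_transformation_def)
lemma good_inner: "good R g \<Longrightarrow> lin g u \<bullet> lin g v = u \<bullet> v" by (simp add: good_def orthogonal_transformation_def)
lemma good_img: "good R g \<Longrightarrow> lin g ` R = R" by (simp add: good_def)
lemma good_int: "good R g \<Longrightarrow> c \<in> R \<Longrightarrow> g 0 \<bullet> c \<in> \<int>" by (simp add: good_def)

lemma good_comp: assumes g: "good R g" and f: "good R f" shows "good R (g \<circ> f)"
proof -
  have lc: "lin (g \<circ> f) = lin g \<circ> lin f" using lin_comp good_lin[OF g] by blast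
  have o: "orthogonal_transformation (lin (g \<circ> f))"
    unfolding lc using orthogonal_transformation_compose good_orth[OF g] good_orth[OF f] by blast
  have im: "lin (g \<circ> f) ` R = R" unfolding lc image_comp[symmetric] using good_img[OF g] good_img[OF f] by simp
  have "(g \<circ> f) 0 \<bullet> c \<in> \<int>" if c: "c \<in> R" for c
  proof -
    obtain c' where c': "c' \<in> R" "c = lin g c'" using good_img[OF g] c by blast
    have "(g \<circ> f) 0 \<bullet> c = lin g (f 0) \<bullet> lin g c' + g 0 \<bullet> c"
      using g_decomp[of g "f 0"] c' by (simp add: inner_add_left)
    also have "\<dots> = f 0 \<bullet> c' + g 0 \<bullet> c" using good_inner[OF g] by simp
    finally show ?thesis using good_int[OF f c'(1)] good_int[OF g c] by simp
  qed
  then show ?thesis using o im by (simp add: good_def)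
qed

lemma good_inj: "good R g \<Longrightarrow> inj g"
proof -
  assume g: "good R g"
  have "inj (lin g)" using orthogonal_transformation_inj good_orth[OF g] by blast
  then show "inj g" unfolding inj_def using g_decomp[of g] by (metis add_right_cancel)
qed

lemma good_surj: "good R g \<Longrightarrow> \<exists>x. g x = y"
proof -
  assume g: "good R g"
  have "surj (lin g)" using orthogonal_transformation_surj good_orth[OF g] by blast
  then obtain x where "lin g x = y - g 0" by (metis surjD)
  then show ?thesis using g_decomp[of g x] by (metis diff_add_cancel)
qed

lemma good_dist: "good R g \<Longrightarrow> dist (g u) (g v) = dist u v"
proof -
  assume g: "good R g"
  have "g u - g v = lin g (u - v)" using g_decomp[of g] linear_diff[OF good_lin[OF g]] by (metis add_diff_cancel_right)
  then show ?thesis using orthogonal_transformation_norm[OF good_orth[OF g]] by (simp add: dist_norm)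
qed

lemma phi_in: "good R g \<Longrightarrow> fst h \<in> R \<Longrightarrow> snd h \<in> \<int> \<Longrightarrow> fst (phi g h) \<in> R \<and> snd (phi g h) \<in> \<int>"
  using good_img[of g] good_int[of g] by (auto simp: phi_def)

lemma phi_surj: assumes g: "good R g" and c: "c \<in> R" and j: "j \<in> \<int>"
  shows "\<exists>h. fst h \<in> R \<and> snd h \<in> \<int> \<and> phi g h = (c, j)"
proof -
  obtain c' where c': "c' \<in> R" "c = lin g c'" using good_img[OF g] c by blast
  show ?thesis
    by (rule exI[of _ "(c', j - g 0 \<bullet> c)"]) (use c' j good_int[OF g c] in \<open>auto simp: phi_def\<close>)
qed

lemma phi_side: "good R g \<Longrightarrow> g v \<bullet> fst (phi g h) - snd (phi g h) = v \<bullet> fst h - snd h"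
  using g_decomp[of g v] good_inner[of g v "fst h"] by (simp add: phi_def inner_add_left)

lemma phi_negp: "good R g \<Longrightarrow> phi g (negp h) = negp (phi g h)"
  using linear_neg[OF good_lin[of g]] by (simp add: phi_def negp_def)

lemma phi_inj: assumes g: "good R g" and e: "phi g h1 = phi g h2" shows "h1 = h2"
proof -
  have "inj (lin g)" using orthogonal_transformation_inj good_orth[OF g] by blast
  moreover have "lin g (fst h1) = lin g (fst h2)" using e by (simp add: phi_def)
  ultimately have 1: "fst h1 = fst h2" by (simp add: inj_def)
  then have "snd h1 = snd h2" using e by (simp add: phi_def)
  with 1 show ?thesis by (simp add: prod_eq_iff)
qed

lemma conj: assumes g: "good R g" shows "g \<circ> rfp h = rfp (phi g h) \<circ> g"
proof
  fix v
  let ?L = "lin g" and ?c = "fst h" and ?j = "snd h"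
  define \<alpha> where "\<alpha> = (v \<bullet> ?c - ?j) * 2 / (?c \<bullet> ?c)"
  have lin: "linear ?L" using good_lin[OF g] .
  have 1: "g (rf ?c ?j v) = ?L (v - \<alpha> *\<^sub>R ?c) + g 0" unfolding rf_def \<alpha>_def by (rule g_decomp)
  have 2: "?L (v - \<alpha> *\<^sub>R ?c) = ?L v - \<alpha> *\<^sub>R ?L ?c"
    using linear_diff[OF lin] linear_scale[OF lin] by metis
  have 3: "(g v \<bullet> ?L ?c - (?j + g 0 \<bullet> ?L ?c)) * 2 / (?L ?c \<bullet> ?L ?c) = \<alpha>"
  proof -
    have "g v \<bullet> ?L ?c = ?L v \<bullet> ?L ?c + g 0 \<bullet> ?L ?c" using g_decomp[of g v] inner_add_left by metis
    then have "g v \<bullet> ?L ?c - (?j + g 0 \<bullet> ?L ?c) = v \<bullet> ?c - ?j" using good_inner[OF g] by simp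
    then show ?thesis unfolding \<alpha>_def using good_inner[OF g] by simp
  qed
  have "rf (?L ?c) (?j + g 0 \<bullet> ?L ?c) (g v) = g v - \<alpha> *\<^sub>R ?L ?c" unfolding rf_def 3 ..
  also have "\<dots> = ?L v - \<alpha> *\<^sub>R ?L ?c + g 0" using g_decomp[of g v] by simp
  finally show "(g \<circ> rfp h) v = (rfp (phi g h) \<circ> g) v" using 1 2 by (simp add: rfp_def phi_def)
qed

lemma phi_lt: "good R g \<Longrightarrow> (g v \<bullet> fst (phi g h) < snd (phi g h)) = (v \<bullet> fst h < snd h)"
  using phi_side[of g v h] by linarith
lemma phi_gt: "good R g \<Longrightarrow> (g v \<bullet> fst (phi g h) > snd (phi g h)) = (v \<bullet> fst h > snd h)"
  using phi_side[of g v h] by linarith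
lemma below_img: "good R g \<Longrightarrow> below (g ` A) (phi g h) \<longleftrightarrow> below A h"
  unfolding below_def by (simp add: phi_lt)
lemma above_img: "good R g \<Longrightarrow> above (g ` A) (phi g h) \<longleftrightarrow> above A h"
  unfolding above_def by (simp add: phi_gt)
lemma opp_img: "good R g \<Longrightarrow> opp (g ` A) (g ` B) (phi g h) \<longleftrightarrow> opp A B h"
  by (simp add: opp_def below_img above_img)

end


lemma opp_mono: "opp A B h \<Longrightarrow> A' \<subseteq> A \<Longrightarrow> B' \<subseteq> B \<Longrightarrow> opp A' B' h"
  unfolding opp_def below_def above_def by blast

lemma opp_xor:
  assumes "A \<noteq> {}" "B \<noteq> {}" "C \<noteq> {}"
    and "below A h \<or> above A h" "below B h \<or> above B h" "below C h \<or> above C h"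
  shows "opp A C h \<longleftrightarrow> (opp A B h \<longleftrightarrow> \<not> opp B C h)"
  using assms below_above_ne[of A h] below_above_ne[of B h] below_above_ne[of C h]
  unfolding opp_def by blast

lemma rot_perp: fixes b c :: "real^2"
  assumes b: "b \<noteq> 0" and d: "(vector [- b$2, b$1] :: real^2) \<bullet> c = 0"
  shows "c = ((c \<bullet> b) / (b \<bullet> b)) *\<^sub>R b"
proof -
  have bb: "b \<bullet> b \<noteq> 0" using b by simp
  have d': "- b$2 * c$1 + b$1 * c$2 = 0" using d by (simp add: inner_vec_def sum_2)
  have i: "c \<bullet> b = c$1 * b$1 + c$2 * b$2" "b \<bullet> b = b$1 * b$1 + b$2 * b$2"
    by (simp_all add: inner_vec_def sum_2)
  have "c$i * (b \<bullet> b) = (c \<bullet> b) * b$i" for i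
  proof (cases "i = 1")
    case True
    have "c$1 * (b$1 * b$1 + b$2 * b$2) = (c$1 * b$1 + c$2 * b$2) * b$1"
      using d' by algebra
    then show ?thesis using True i by simp
  next
    case False
    then have 2: "i = 2" using exhaust_2[of i] by blast
    have "c$2 * (b$1 * b$1 + b$2 * b$2) = (c$1 * b$1 + c$2 * b$2) * b$2"
      using d' by algebra
    then show ?thesis using 2 i by simp
  qed
  then show ?thesis using bb by (simp add: vec_eq_iff field_simps)
qed

lemma rot_props: fixes b :: "real^2"
  shows "(vector [- b$2, b$1] :: real^2) \<bullet> b = 0"
    and "norm (vector [- b$2, b$1] :: real^2) = norm b"
  by (simp_all add: inner_vec_def sum_2 norm_eq_sqrt_inner algebra_simps)

lemma line_point:
  fixes b c p u :: "real^2"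
  assumes b: "b \<noteq> 0" and u: "u \<in> ball p e" and ub: "u \<bullet> b = k"
    and H1: "\<forall>v\<in>ball p e. v \<bullet> b < k \<longrightarrow> v \<bullet> c < j"
    and H2: "\<forall>v\<in>ball p e. v \<bullet> b > k \<longrightarrow> v \<bullet> c > j"
  shows "u \<bullet> c = j"
proof (rule ccontr)
  assume ne: "u \<bullet> c \<noteq> j"
  define r where "r = e - dist p u"
  have r: "r > 0" using u by (simp add: r_def)
  define D where "D = \<bar>u \<bullet> c - j\<bar>"
  have D: "D > 0" using ne by (simp add: D_def)
  have nb: "norm b > 0" using b by simp
  define \<delta> where "\<delta> = min (r / (2 * norm b)) (D / (2 * (\<bar>b \<bullet> c\<bar> + 1)))"
  have \<delta>: "\<delta> > 0" using r D nb by (simp add: \<delta>_def)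
  have \<delta>1: "\<delta> * norm b < r"
  proof -
    have "\<delta> \<le> r / (2 * norm b)" by (simp add: \<delta>_def)
    then have "\<delta> * norm b \<le> r / (2 * norm b) * norm b" using nb by (intro mult_right_mono) auto
    also have "\<dots> = r / 2" using nb by simp
    finally show ?thesis using r by simp
  qed
  have \<delta>2: "\<delta> * \<bar>b \<bullet> c\<bar> < D"
  proof -
    have "\<delta> * \<bar>b \<bullet> c\<bar> \<le> D / (2 * (\<bar>b \<bullet> c\<bar> + 1)) * \<bar>b \<bullet> c\<bar>"
    proof (rule mult_right_mono)
      show "\<delta> \<le> D / (2 * (\<bar>b \<bullet> c\<bar> + 1))" by (simp add: \<delta>_def)
    qed simp
    also have "\<dots> < D"
    proof -
      have hh: "0 \<le> D * \<bar>b \<bullet> c\<bar>" using D by simp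
      show ?thesis using hh D by (simp add: field_simps add_pos_nonneg)
    qed
    finally show ?thesis .
  qed
  have inball: "u + t *\<^sub>R b \<in> ball p e" if "\<bar>t\<bar> = \<delta>" for t
  proof -
    have "dist p (u + t *\<^sub>R b) \<le> dist p u + dist u (u + t *\<^sub>R b)" by (rule dist_triangle)
    also have "dist u (u + t *\<^sub>R b) = \<delta> * norm b" using that by (simp add: dist_norm)
    finally show ?thesis using \<delta>1 by (simp add: r_def)
  qed
  have bb: "b \<bullet> b > 0" using b by simp
  have v1: "u + \<delta> *\<^sub>R b \<in> ball p e" using inball \<delta> by simp
  have v2: "u + (-\<delta>) *\<^sub>R b \<in> ball p e" using inball[of "-\<delta>"] \<delta> by (simp del: scaleR_minus_left)
  have "(u + \<delta> *\<^sub>R b) \<bullet> b > k" using \<delta> bb by (simp add: inner_add_left ub)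
  then have p1: "(u + \<delta> *\<^sub>R b) \<bullet> c > j" using H2 v1 by blast
  have "(u + (-\<delta>) *\<^sub>R b) \<bullet> b < k" using \<delta> bb by (simp add: inner_add_left inner_diff_left ub)
  then have p2: "(u + (-\<delta>) *\<^sub>R b) \<bullet> c < j" using H1 v2 by blast
  have e1: "(u + \<delta> *\<^sub>R b) \<bullet> c = u \<bullet> c + \<delta> * (b \<bullet> c)" by (simp add: inner_add_left)
  have e2: "(u + (-\<delta>) *\<^sub>R b) \<bullet> c = u \<bullet> c - \<delta> * (b \<bullet> c)" by (simp add: inner_add_left inner_diff_left)
  have "\<bar>\<delta> * (b \<bullet> c)\<bar> < D" using \<delta>2 \<delta> by (simp add: abs_mult)
  then show False using p1 p2 e1 e2 D_def by (auto simp: abs_if split: if_splits)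
qed

context aw begin

lemma A0_iff: "v \<in> A0 R xi \<longleftrightarrow> (\<forall>b\<in>R. b \<bullet> xi > 0 \<longrightarrow> 0 < v \<bullet> b \<and> v \<bullet> b < 1)"
  by (auto simp: A0_def pos_roots_def)

lemma A0_bound: assumes v: "v \<in> A0 R xi" and c: "c \<in> R"
  shows "(c \<bullet> xi > 0 \<and> 0 < v \<bullet> c \<and> v \<bullet> c < 1) \<or> (c \<bullet> xi < 0 \<and> -1 < v \<bullet> c \<and> v \<bullet> c < 0)"
proof (cases "c \<bullet> xi > 0")
  case True then show ?thesis using v c A0_iff by auto
next
  case False
  then have "c \<bullet> xi < 0" using reg c by force
  moreover have "(-c) \<bullet> xi > 0" using calculation by simp
  ultimately show ?thesis using v negR[OF c] A0_iff by force
qed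

lemma A0_side: assumes c: "fst h \<in> R" and j: "snd h \<in> \<int>" shows "below (A0 R xi) h \<or> above (A0 R xi) h"
proof -
  obtain n where n: "snd h = of_int n" using j Ints_cases by blast
  consider "n \<ge> 1" | "n \<le> -1" | "n = 0" by linarith
  then show ?thesis
  proof cases
    case 1 then show ?thesis using A0_bound[OF _ c] n unfolding below_def by force
  next
    case 2 then show ?thesis using A0_bound[OF _ c] n unfolding above_def by force
  next
    case 3
    show ?thesis
    proof (cases "fst h \<bullet> xi > 0")
      case True then show ?thesis using A0_bound[OF _ c] n 3 unfolding above_def by force
    next
      case False then show ?thesis using A0_bound[OF _ c] n 3 unfolding below_def by force
    qed
  qed
qed

lemma A0_small: "\<exists>\<epsilon>>0. \<forall>t. 0 < t \<and> t \<le> \<epsilon> \<longrightarrow> t *\<^sub>R xi \<in> A0 R xi"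
proof -
  define M where "M = (\<Sum>b\<in>R. \<bar>b \<bullet> xi\<bar>)"
  have M: "M \<ge> 0" by (simp add: M_def sum_nonneg)
  have bM: "\<bar>b \<bullet> xi\<bar> \<le> M" if "b \<in> R" for b
    unfolding M_def using that finR by (intro member_le_sum) auto
  define \<epsilon> where "\<epsilon> = 1 / (M + 1)"
  have \<epsilon>: "\<epsilon> > 0" using M by (simp add: \<epsilon>_def)
  have "t *\<^sub>R xi \<in> A0 R xi" if t: "0 < t" "t \<le> \<epsilon>" for t
    unfolding A0_iff
  proof (intro ballI impI conjI)
    fix b assume b: "b \<in> R" and p: "b \<bullet> xi > 0"
    show "0 < t *\<^sub>R xi \<bullet> b" using t p by (simp add: inner_commute)
    have "t * (b \<bullet> xi) \<le> \<epsilon> * M" using t bM[OF b] p \<epsilon> M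
      by (intro mult_mono) auto
    also have "\<epsilon> * M < 1" using M by (simp add: \<epsilon>_def field_simps)
    finally show "t *\<^sub>R xi \<bullet> b < 1" by (simp add: inner_commute)
  qed
  then show ?thesis using \<epsilon> by blast
qed

lemma A0_ne: "A0 R xi \<noteq> {}" using A0_small by fastforce

lemma gA0_side: assumes g: "good R g" and c: "fst h \<in> R" and j: "snd h \<in> \<int>"
  shows "below (g ` A0 R xi) h \<or> above (g ` A0 R xi) h"
proof -
  obtain h' where h': "fst h' \<in> R" "snd h' \<in> \<int>" "phi g h' = (fst h, snd h)"
    using phi_surj[OF g c j] by blast
  then have "h = phi g h'" by simp
  then show ?thesis using A0_side[OF h'(1,2)] below_img[OF g] above_img[OF g] by simp
qed

lemma simple_gen_E: assumes "s \<in> simple_gens R xi"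
  obtains b k where "s = aff_refl b k" "b \<in> R" "is_wall (A0 R xi) b k"
  using assms unfolding simple_gens_def by blast

lemma simple_good: "s \<in> simple_gens R xi \<Longrightarrow> good R s"
  by (erule simple_gen_E) (simp add: good_aff)

lemma T2: assumes b: "b \<in> R" and k: "k \<in> \<int>" shows "opp (A0 R xi) (rf b k ` A0 R xi) (b, k)"
proof -
  have bz: "b \<noteq> 0" using nz[OF b] .
  have s: "rf b k v \<bullet> b = 2 * k - v \<bullet> b" for v using rf_inner[OF bz] .
  from A0_side[of "(b,k)"] b k show ?thesis
    unfolding opp_def below_def above_def using s by force
qed

lemma T1: assumes b0: "b0 \<in> R" and w: "is_wall (A0 R xi) b0 k0"
  and c: "c \<in> R" and o: "opp (A0 R xi) (rf b0 (of_int k0) ` A0 R xi) (c, j)"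
  shows "(c, j) = (b0, of_int k0) \<or> (c, j) = negp (b0, of_int k0)"
proof -
  let ?k = "real_of_int k0" and ?s = "rf b0 (of_int k0)"
  have bz: "b0 \<noteq> 0" using nz[OF b0] .
  have gs: "good R ?s" using good_rf[OF b0] by simp
  obtain p e where pe: "p \<bullet> b0 = ?k" "e > 0"
    and hb: "{v \<in> ball p e. v \<bullet> b0 < ?k} \<subseteq> A0 R xi \<or> {v \<in> ball p e. v \<bullet> b0 > ?k} \<subseteq> A0 R xi"
    using w unfolding is_wall_def by blast
  have sp: "?s p = p" using pe(1) by (simp add: rf_def)
  have sball: "?s v \<in> ball p e" if "v \<in> ball p e" for v
    using good_dist[OF gs, of p v] sp that by (simp add: dist_commute)
  have sside: "?s v \<bullet> b0 = 2 * ?k - v \<bullet> b0" for v using rf_inner[OF bz] .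
  have sinv: "?s (?s v) = v" for v using rf_invol[OF bz] .
  let ?H1 = "{v \<in> ball p e. v \<bullet> b0 < ?k}" and ?H2 = "{v \<in> ball p e. v \<bullet> b0 > ?k}"
  have swap: "?H2 \<subseteq> ?s ` X" if "?H1 \<subseteq> X" for X
  proof
    fix v assume v: "v \<in> ?H2"
    then have "?s v \<in> ?H1" using sball sside by auto
    then have "?s v \<in> X" using that by blast
    then show "v \<in> ?s ` X" using sinv by (metis image_eqI)
  qed
  have swap2: "?H1 \<subseteq> ?s ` X" if "?H2 \<subseteq> X" for X
  proof
    fix v assume v: "v \<in> ?H1"
    then have "?s v \<in> ?H2" using sball sside by auto
    then have "?s v \<in> X" using that by blast
    then show "v \<in> ?s ` X" using sinv by (metis image_eqI)
  qed
  have oH: "opp ?H1 ?H2 (c, j)"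
    using hb
  proof
    assume "?H1 \<subseteq> A0 R xi"
    then show ?thesis using opp_mono[OF o] swap by blast
  next
    assume "?H2 \<subseteq> A0 R xi"
    then have "opp ?H2 ?H1 (c, j)" using opp_mono[OF o] swap2 by blast
    then show ?thesis using opp_sym by blast
  qed
  have online: "u \<bullet> c = j" if u: "u \<in> ball p e" "u \<bullet> b0 = ?k" for u
    using oH unfolding opp_def below_def above_def
  proof
    assume "(\<forall>v\<in>?H1. v \<bullet> fst (c, j) < snd (c, j)) \<and> (\<forall>v\<in>?H2. snd (c, j) < v \<bullet> fst (c, j))"
    then show ?thesis using line_point[OF bz u, of c j] by auto
  next
    assume a: "(\<forall>v\<in>?H1. snd (c, j) < v \<bullet> fst (c, j)) \<and> (\<forall>v\<in>?H2. v \<bullet> fst (c, j) < snd (c, j))"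
    have "u \<bullet> (-c) = -j" using a by (intro line_point[OF bz u]) auto
    then show ?thesis by simp
  qed
  define d :: "real^2" where "d = vector [- b0$2, b0$1]"
  have db: "d \<bullet> b0 = 0" "norm d = norm b0" unfolding d_def using rot_props by auto
  have nd: "norm d > 0" using db bz by simp
  define \<tau> where "\<tau> = e / (2 * norm d)"
  have \<tau>: "\<tau> > 0" using pe nd by (simp add: \<tau>_def)
  have "dist p (p + \<tau> *\<^sub>R d) = e / 2" using nd \<tau> pe by (simp add: dist_norm \<tau>_def)
  then have u2: "p + \<tau> *\<^sub>R d \<in> ball p e" using pe by simp
  have "(p + \<tau> *\<^sub>R d) \<bullet> b0 = ?k" using db pe by (simp add: inner_add_left)
  then have "(p + \<tau> *\<^sub>R d) \<bullet> c = j" using online u2 by blast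
  moreover have "p \<bullet> c = j" using online pe by simp
  ultimately have "\<tau> * (d \<bullet> c) = 0" by (simp add: inner_add_left)
  then have dc: "d \<bullet> c = 0" using \<tau> by simp
  define lam where "lam = (c \<bullet> b0) / (b0 \<bullet> b0)"
  have cl: "c = lam *\<^sub>R b0" using rot_perp[OF bz] dc unfolding d_def lam_def by blast
  then have "lam = 1 \<or> lam = -1" using redR[OF b0] c by simp
  moreover have "j = lam * ?k" using \<open>p \<bullet> c = j\<close> cl pe by simp
  ultimately show ?thesis using cl by (auto simp: negp_def)
qed

definition symd :: "'a set \<Rightarrow> 'a set \<Rightarrow> 'a set" (infixl "symd" 65) where
  "A symd B = (A - B) \<union> (B - A)"

definition Sx :: "(real^2 \<Rightarrow> real^2) \<Rightarrow> ((real^2) \<times> real) set" where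
  "Sx x = {h. fst h \<in> R \<and> snd h \<in> \<int> \<and> opp (A0 R xi) (x ` A0 R xi) h}"

lemma Sx_negp: "negp h \<in> Sx x \<longleftrightarrow> h \<in> Sx x"
proof -
  have 1: "fst (negp h) \<in> R \<longleftrightarrow> fst h \<in> R" using negR[of "fst h"] negR[of "- fst h"] by (auto simp: negp_def)
  have 2: "snd (negp h) \<in> \<int> \<longleftrightarrow> snd h \<in> \<int>" by (simp add: negp_def minus_in_Ints_iff)
  show ?thesis using 1 2 opp_negp[of "A0 R xi" "x ` A0 R xi" h] by (simp add: Sx_def)
qed

lemma Sx_id: "Sx id = {}"
  using A0_ne below_above_ne by (auto simp: Sx_def opp_def)

lemma toggle:
  assumes x: "good R x" and b0: "b0 \<in> R" and w: "is_wall (A0 R xi) b0 k0"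
  shows "Sx (x \<circ> aff_refl b0 k0) = Sx x symd {phi x (b0, of_int k0), phi x (negp (b0, of_int k0))}"
proof -
  let ?s = "aff_refl b0 k0" and ?h0 = "(b0, real_of_int k0)"
  have gs: "good R ?s" using good_aff[OF b0] .
  have gxs: "good R (x \<circ> ?s)" using good_comp[OF x gs] .
  have h0: "fst ?h0 \<in> R" "snd ?h0 \<in> \<int>" using b0 by auto
  have h0n: "fst (negp ?h0) \<in> R" "snd (negp ?h0) \<in> \<int>" using negR[OF b0] by (auto simp: negp_def)
  have key: "h \<in> Sx (x \<circ> ?s) \<longleftrightarrow> (h \<in> Sx x \<longleftrightarrow> h \<notin> {phi x ?h0, phi x (negp ?h0)})"
    if hR: "fst h \<in> R" and hZ: "snd h \<in> \<int>" for h
  proof -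
    obtain h' where h': "fst h' \<in> R" "snd h' \<in> \<int>" "phi x h' = (fst h, snd h)"
      using phi_surj[OF x hR hZ] by blast
    have hh: "h = phi x h'" using h' by simp
    have img: "(x \<circ> ?s) ` A0 R xi = x ` (?s ` A0 R xi)" by (simp add: image_comp)
    have "opp (x ` A0 R xi) ((x \<circ> ?s) ` A0 R xi) h \<longleftrightarrow> opp (A0 R xi) (?s ` A0 R xi) h'"
      unfolding img hh by (rule opp_img[OF x])
    also have "\<dots> \<longleftrightarrow> h' = ?h0 \<or> h' = negp ?h0"
    proof
      assume "opp (A0 R xi) (?s ` A0 R xi) h'"
      then show "h' = ?h0 \<or> h' = negp ?h0"
        using T1[OF b0 w h'(1), of "snd h'"] by (simp add: aff_refl_rf)
    next
      assume "h' = ?h0 \<or> h' = negp ?h0"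
      then show "opp (A0 R xi) (?s ` A0 R xi) h'"
        using T2[OF b0, of "of_int k0"] opp_negp by (auto simp: aff_refl_rf)
    qed
    also have "\<dots> \<longleftrightarrow> h \<in> {phi x ?h0, phi x (negp ?h0)}"
      using hh by (auto dest: phi_inj[OF x])
    finally have oxs: "opp (x ` A0 R xi) ((x \<circ> ?s) ` A0 R xi) h \<longleftrightarrow> h \<in> {phi x ?h0, phi x (negp ?h0)}" .
    have "opp (A0 R xi) ((x \<circ> ?s) ` A0 R xi) h \<longleftrightarrow>
          (opp (A0 R xi) (x ` A0 R xi) h \<longleftrightarrow> \<not> opp (x ` A0 R xi) ((x \<circ> ?s) ` A0 R xi) h)"
      by (rule opp_xor) (use A0_ne A0_side[OF hR hZ] gA0_side[OF x hR hZ] gA0_side[OF gxs hR hZ] in auto)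
    then show ?thesis using oxs hR hZ by (simp add: Sx_def)
  qed
  have p1: "fst (phi x ?h0) \<in> R \<and> snd (phi x ?h0) \<in> \<int>" using phi_in[OF x h0] .
  have p2: "fst (phi x (negp ?h0)) \<in> R \<and> snd (phi x (negp ?h0)) \<in> \<int>" using phi_in[OF x h0n] .
  show ?thesis
  proof (rule set_eqI)
    fix h
    show "h \<in> Sx (x \<circ> ?s) \<longleftrightarrow> h \<in> Sx x symd {phi x ?h0, phi x (negp ?h0)}"
    proof (cases "fst h \<in> R \<and> snd h \<in> \<int>")
      case True then show ?thesis using key by (auto simp: symd_def)
    next
      case False then show ?thesis using p1 p2 by (auto simp: Sx_def symd_def)
    qed
  qed
qed

lemma phi_h0_ne: assumes x: "good R x" and b0: "b0 \<in> R"
  shows "phi x (b0, k) \<noteq> phi x (negp (b0, k))"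
proof
  assume "phi x (b0, k) = phi x (negp (b0, k))"
  then have "(b0, k) = negp (b0, k)" by (rule phi_inj[OF x])
  then have e: "b0 = - b0" by (simp add: negp_def)
  have "2 *\<^sub>R b0 = 0" by (metis e scaleR_2 add.right_inverse)
  then show False using nz[OF b0] by simp
qed

end


context aw begin

abbreviation Sg where "Sg \<equiv> simple_gens R xi"

lemma good_prodl: "set ss \<subseteq> Sg \<Longrightarrow> good R (prodl ss)"
proof (induction ss)
  case Nil then show ?case using good_id by (simp only: prodl_Nil)
next
  case (Cons a ss)
  then have "a \<in> Sg" "good R (prodl ss)" by auto
  then show ?case unfolding prodl_Cons using good_comp simple_good by blast
qed

lemma Sx_id': "Sx (\<lambda>a. a) = {}" using Sx_id by (simp add: id_def)

lemma card_symd_le: "finite A \<Longrightarrow> finite B \<Longrightarrow> card (A symd B) \<le> card A + card B"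
proof -
  assume f: "finite A" "finite B"
  have "card (A symd B) \<le> card (A - B) + card (B - A)" unfolding symd_def using card_Un_le by blast
  also have "\<dots> \<le> card A + card B" using f by (intro add_mono card_mono) auto
  finally show ?thesis .
qed

lemma Sx_bound: "set ss \<subseteq> Sg \<Longrightarrow> finite (Sx (prodl ss)) \<and> card (Sx (prodl ss)) \<le> 2 * length ss"
proof (induction ss rule: rev_induct)
  case Nil
  show ?case by (simp only: prodl_Nil Sx_id finite.emptyI card.empty) simp
next
  case (snoc s ss)
  have ss: "set ss \<subseteq> Sg" and s: "s \<in> Sg" using snoc.prems(1) by auto
  obtain b k where bk: "s = aff_refl b k" "b \<in> R" "is_wall (A0 R xi) b k" using simple_gen_E[OF s] by blast
  have t: "Sx (prodl (ss @ [s])) = Sx (prodl ss) symd {phi (prodl ss) (b, of_int k), phi (prodl ss) (negp (b, of_int k))}"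
    unfolding prodl_snoc bk(1) by (rule toggle[OF good_prodl[OF ss] bk(2,3)])
  have IH: "finite (Sx (prodl ss))" "card (Sx (prodl ss)) \<le> 2 * length ss" using snoc.IH ss by auto
  have f2: "finite {phi (prodl ss) (b, of_int k), phi (prodl ss) (negp (b, of_int k))}" by simp
  have c2: "card {phi (prodl ss) (b, of_int k), phi (prodl ss) (negp (b, of_int k))} \<le> 2"
    by (rule order_trans[OF card_insert_le_m1]) auto
  have "finite (Sx (prodl (ss @ [s])))" unfolding t symd_def using IH f2 by auto
  moreover have "card (Sx (prodl (ss @ [s]))) \<le> 2 * length (ss @ [s])"
    unfolding t using card_symd_le[OF IH(1) f2] IH(2) c2 by simp
  ultimately show ?case by blast
qed

lemma toggle_card:
  assumes x: "good R x" and fx: "finite (Sx x)" and b0: "b0 \<in> R" and w: "is_wall (A0 R xi) b0 k0"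
  shows "phi x (b0, of_int k0) \<notin> Sx x \<Longrightarrow> card (Sx (x \<circ> aff_refl b0 k0)) = card (Sx x) + 2"
    and "phi x (b0, of_int k0) \<in> Sx x \<Longrightarrow> card (Sx (x \<circ> aff_refl b0 k0)) + 2 = card (Sx x)"
proof -
  let ?p = "phi x (b0, of_int k0)" and ?q = "phi x (negp (b0, of_int k0))"
  have t: "Sx (x \<circ> aff_refl b0 k0) = Sx x symd {?p, ?q}" using toggle[OF x b0 w] .
  have ne: "?p \<noteq> ?q" using phi_h0_ne[OF x b0] .
  have q: "?q = negp ?p" using phi_negp[OF x] .
  have pq: "?p \<in> Sx x \<longleftrightarrow> ?q \<in> Sx x" unfolding q Sx_negp ..
  {
    assume n: "?p \<notin> Sx x"
    then have "Sx (x \<circ> aff_refl b0 k0) = insert ?p (insert ?q (Sx x))" using t pq unfolding symd_def by auto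
    then show "card (Sx (x \<circ> aff_refl b0 k0)) = card (Sx x) + 2" using n pq ne fx by simp
  }
  {
    assume n: "?p \<in> Sx x"
    then have e: "Sx (x \<circ> aff_refl b0 k0) = Sx x - {?p, ?q}" using t pq unfolding symd_def by auto
    have "card (Sx x - {?p, ?q}) = card (Sx x) - card {?p, ?q}" using n pq fx by (intro card_Diff_subset) auto
    moreover have "card {?p, ?q} = 2" using ne by simp
    moreover have "card (Sx x) \<ge> 2" using n pq ne fx
      by (metis calculation(2) card_mono empty_subsetI insert_subset)
    ultimately show "card (Sx (x \<circ> aff_refl b0 k0)) + 2 = card (Sx x)" using e by simp
  }
qed

lemma crossing:
  "set ts \<subseteq> Sg \<Longrightarrow> h \<in> Sx (prodl ts) \<Longrightarrow> \<exists>i<length ts. \<exists>b k. ts ! i = aff_refl b k \<and> b \<in> R \<and>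
     (h = phi (prodl (take i ts)) (b, of_int k) \<or> h = phi (prodl (take i ts)) (negp (b, of_int k)))"
proof (induction ts rule: rev_induct)
  case Nil
  then have "h \<in> Sx id" by (simp only: prodl_Nil)
  then show ?case by (simp add: Sx_id)
next
  case (snoc s ss)
  have ss: "set ss \<subseteq> Sg" and s: "s \<in> Sg" using snoc.prems(1) by auto
  obtain b k where bk: "s = aff_refl b k" "b \<in> R" "is_wall (A0 R xi) b k" using simple_gen_E[OF s] by blast
  have t: "Sx (prodl (ss @ [s])) = Sx (prodl ss) symd {phi (prodl ss) (b, of_int k), phi (prodl ss) (negp (b, of_int k))}"
    unfolding prodl_snoc bk(1) by (rule toggle[OF good_prodl[OF ss] bk(2,3)])
  show ?case
  proof (cases "h \<in> Sx (prodl ss)")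
    case True
    have "\<exists>i<length ss. \<exists>b k. ss ! i = aff_refl b k \<and> b \<in> R \<and>
     (h = phi (prodl (take i ss)) (b, of_int k) \<or> h = phi (prodl (take i ss)) (negp (b, of_int k)))"
      using snoc.IH[OF ss True] .
    then obtain i b' k' where i: "i < length ss" "ss ! i = aff_refl b' k'" "b' \<in> R"
      "h = phi (prodl (take i ss)) (b', of_int k') \<or> h = phi (prodl (take i ss)) (negp (b', of_int k'))"
      by blast
    have e1: "(ss @ [s]) ! i = aff_refl b' k'" using i(1,2) by (simp add: nth_append)
    have e2: "take i (ss @ [s]) = take i ss" using i(1) by simp
    have e3: "i < length (ss @ [s])" using i(1) by simp
    show ?thesis
      by (rule exI[of _ i], rule conjI[OF e3], rule exI[of _ b'], rule exI[of _ k'])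
         (simp only: e1 e2 i(3,4) simp_thms)
  next
    case False
    then have "h = phi (prodl ss) (b, of_int k) \<or> h = phi (prodl ss) (negp (b, of_int k))"
      using snoc.prems(2) t unfolding symd_def by blast
    moreover have e2: "take (length ss) (ss @ [s]) = ss" by simp
    moreover have e1: "(ss @ [s]) ! length ss = aff_refl b k" using bk(1) by simp
    moreover have e3: "length ss < length (ss @ [s])" by simp
    ultimately show ?thesis
      by (intro exI[of _ "length ss"] conjI[OF e3] exI[of _ b] exI[of _ k]) (simp only: e1 e2 bk(2) simp_thms)
  qed
qed

lemma deletion:
  assumes ts: "set ts \<subseteq> Sg" and b0: "b0 \<in> R"
    and h: "phi (prodl ts) (b0, of_int k0) \<in> Sx (prodl ts)"
  shows "\<exists>ts'. set ts' \<subseteq> Sg \<and> length ts' + 1 = length ts \<and> prodl ts' = prodl ts \<circ> aff_refl b0 k0"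
proof -
  let ?x = "prodl ts"
  have gx: "good R ?x" using good_prodl[OF ts] .
  obtain i b k where i: "i < length ts" "ts ! i = aff_refl b k" "b \<in> R"
    and hh: "phi ?x (b0, of_int k0) = phi (prodl (take i ts)) (b, of_int k) \<or>
             phi ?x (b0, of_int k0) = phi (prodl (take i ts)) (negp (b, of_int k))"
    using crossing[OF ts h] by blast
  let ?y = "prodl (take i ts)" and ?z = "prodl (drop (Suc i) ts)" and ?t = "aff_refl b k"
  have tsi: "set (take i ts) \<subseteq> Sg" using ts by (meson order_trans set_take_subset)
  have gy: "good R ?y" using good_prodl[OF tsi] .
  have rr: "rfp (phi ?x (b0, of_int k0)) = rfp (phi ?y (b, of_int k))"
    using hh phi_negp[OF gy] rfp_negp by metis
  have dec: "?x = ?y \<circ> ?t \<circ> ?z"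
  proof -
    have "ts = take i ts @ ts ! i # drop (Suc i) ts" using id_take_nth_drop[OF i(1)] .
    then have "prodl ts = prodl (take i ts @ ts ! i # drop (Suc i) ts)" by simp
    then show ?thesis using i(2) by (simp add: comp_assoc)
  qed
  have tt: "?t \<circ> ?t = id" using rf_invol[OF nz[OF i(3)]] by (simp add: fun_eq_iff aff_refl_rf)
  have c1: "?x \<circ> aff_refl b0 k0 = rfp (phi ?x (b0, of_int k0)) \<circ> ?x"
    using conj[OF gx, of "(b0, of_int k0)"] by (simp add: rfp_def aff_refl_rf)
  have c2: "rfp (phi ?y (b, of_int k)) \<circ> ?y = ?y \<circ> ?t"
    using conj[OF gy, of "(b, of_int k)"] by (simp add: rfp_def aff_refl_rf)
  have "?x \<circ> aff_refl b0 k0 = rfp (phi ?y (b, of_int k)) \<circ> ?y \<circ> ?t \<circ> ?z"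
    using c1 rr dec by (simp add: comp_assoc)
  also have "\<dots> = ?y \<circ> (?t \<circ> ?t) \<circ> ?z" using c2 by (simp add: comp_assoc)
  also have "\<dots> = prodl (take i ts @ drop (Suc i) ts)" using tt by simp
  finally have e: "prodl (take i ts @ drop (Suc i) ts) = ?x \<circ> aff_refl b0 k0" ..
  have "set (take i ts @ drop (Suc i) ts) \<subseteq> Sg"
    using ts set_take_subset[of i ts] set_drop_subset[of "Suc i" ts] by (simp only: set_append) blast
  moreover have "length (take i ts @ drop (Suc i) ts) + 1 = length ts" using i(1) by simp
  ultimately show ?thesis using e by blast
qed

lemma shorten:
  "set ss \<subseteq> Sg \<Longrightarrow> card (Sx (prodl ss)) < 2 * length ss \<Longrightarrow>
   \<exists>ss'. set ss' \<subseteq> Sg \<and> prodl ss' = prodl ss \<and> length ss' < length ss"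
proof (induction ss rule: rev_induct)
  case Nil then show ?case by simp
next
  case (snoc s ss)
  have ss: "set ss \<subseteq> Sg" and s: "s \<in> Sg" using snoc.prems(1) by auto
  obtain b k where bk: "s = aff_refl b k" "b \<in> R" "is_wall (A0 R xi) b k" using simple_gen_E[OF s] by blast
  have ps: "prodl (ss @ [s]) = prodl ss \<circ> aff_refl b k" by (simp only: prodl_snoc bk(1))
  show ?case
  proof (cases "card (Sx (prodl ss)) < 2 * length ss")
    case True
    have "\<exists>ss'. set ss' \<subseteq> Sg \<and> prodl ss' = prodl ss \<and> length ss' < length ss"
      using snoc.IH[OF ss True] .
    then obtain ss' where ss': "set ss' \<subseteq> Sg" "prodl ss' = prodl ss" "length ss' < length ss"
      by blast
    have "set (ss' @ [s]) \<subseteq> Sg" using ss'(1) s by simp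
    moreover have "prodl (ss' @ [s]) = prodl (ss @ [s])" by (simp only: prodl_snoc ss'(2))
    moreover have "length (ss' @ [s]) < length (ss @ [s])" using ss'(3) by simp
    ultimately show ?thesis by blast
  next
    case False
    have fx: "finite (Sx (prodl ss))" using Sx_bound[OF ss] by blast
    have "phi (prodl ss) (b, of_int k) \<in> Sx (prodl ss)"
    proof (rule ccontr)
      assume "phi (prodl ss) (b, of_int k) \<notin> Sx (prodl ss)"
      then have "card (Sx (prodl ss \<circ> aff_refl b k)) = card (Sx (prodl ss)) + 2"
        using toggle_card(1)[OF good_prodl[OF ss] fx bk(2,3)] by blast
      then have c: "card (Sx (prodl (ss @ [s]))) = card (Sx (prodl ss)) + 2" by (simp only: ps)
      have l: "length (ss @ [s]) = length ss + 1" by simp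
      show False using c l False snoc.prems(2) by linarith
    qed
    then obtain ts' where ts': "set ts' \<subseteq> Sg" "length ts' + 1 = length ss" "prodl ts' = prodl ss \<circ> aff_refl b k"
      using deletion[OF ss bk(2)] by blast
    have "prodl ts' = prodl (ss @ [s])" by (simp only: ts'(3) ps)
    moreover have "length ts' < length (ss @ [s])" using ts'(2) by simp
    ultimately show ?thesis using ts'(1) by blast
  qed
qed

definition Expr where "Expr = {prodl ss | ss. set ss \<subseteq> Sg}"

lemma clen_alt: "clen R xi x = (LEAST n. \<exists>ss. length ss = n \<and> set ss \<subseteq> Sg \<and> prodl ss = x)"
  by (simp only: clen_def prodl_def)

lemma clen_eq: assumes x: "x \<in> Expr" shows "2 * clen R xi x = card (Sx x)"
proof -
  let ?P = "\<lambda>n. \<exists>ss. length ss = n \<and> set ss \<subseteq> Sg \<and> prodl ss = x"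
  obtain ss0 where ss0: "set ss0 \<subseteq> Sg" "prodl ss0 = x" using x unfolding Expr_def by blast
  have P0: "?P (length ss0)" using ss0 by blast
  have "?P (clen R xi x)" unfolding clen_alt by (rule LeastI[of ?P, OF P0])
  then obtain ss where ss: "length ss = clen R xi x" "set ss \<subseteq> Sg" "prodl ss = x"
    by blast
  have le: "card (Sx x) \<le> 2 * clen R xi x" using Sx_bound[OF ss(2)] ss by simp
  have "\<not> card (Sx x) < 2 * clen R xi x"
  proof
    assume "card (Sx x) < 2 * clen R xi x"
    then have "card (Sx (prodl ss)) < 2 * length ss" using ss by simp
    then obtain ss' where ss': "set ss' \<subseteq> Sg" "prodl ss' = prodl ss" "length ss' < length ss"
      using shorten[OF ss(2)] by blast
    then have "?P (length ss')" using ss(3) by blast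
    then have "clen R xi x \<le> length ss'" unfolding clen_alt by (rule Least_le)
    then show False using ss' ss by simp
  qed
  then show ?thesis using le by simp
qed

end


definition Cl :: "((real^2) \<times> real) set \<Rightarrow> (real^2) set" where
  "Cl P = {v. \<forall>h\<in>P. v \<bullet> fst h \<le> snd h}"
definition Op :: "((real^2) \<times> real) set \<Rightarrow> (real^2) set" where
  "Op P = {v. \<forall>h\<in>P. v \<bullet> fst h < snd h}"

lemma open_sub_Cl_Op:
  assumes nz: "\<forall>h\<in>P. fst h \<noteq> 0" and U: "open U" "U \<subseteq> Cl P" and v: "v \<in> U"
  shows "v \<in> Op P"
  unfolding Op_def
proof (intro CollectI ballI)
  fix h assume h: "h \<in> P"
  let ?c = "fst h"
  have nc: "norm ?c > 0" using nz h by simp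
  obtain \<epsilon> where \<epsilon>: "\<epsilon> > 0" "ball v \<epsilon> \<subseteq> U" using U(1) v open_contains_ball by blast
  define v' where "v' = v + (\<epsilon> / (2 * norm ?c)) *\<^sub>R ?c"
  have "dist v v' = \<epsilon> / 2" using nc \<epsilon> by (simp add: v'_def dist_norm)
  then have "v' \<in> U" using \<epsilon> by auto
  then have "v' \<bullet> ?c \<le> snd h" using U(2) h by (auto simp: Cl_def)
  moreover have "v' \<bullet> ?c = v \<bullet> ?c + (\<epsilon> / (2 * norm ?c)) * (?c \<bullet> ?c)"
    by (simp add: v'_def inner_add_left)
  moreover have "(\<epsilon> / (2 * norm ?c)) * (?c \<bullet> ?c) > 0" using nc \<epsilon> by simp
  ultimately show "v \<bullet> ?c < snd h" by linarith
qed

lemma min_system: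
  fixes P :: "((real^2) \<times> real) set"
  assumes fin: "finite P" and nz: "\<forall>h\<in>P. fst h \<noteq> 0" and x0: "x0 \<in> Op P"
  shows "\<exists>F\<subseteq>P. Cl F \<subseteq> Cl P \<and>
     (\<forall>h\<in>F. \<exists>p e. p \<bullet> fst h = snd h \<and> e > 0 \<and> {v \<in> ball p e. v \<bullet> fst h < snd h} \<subseteq> Op P)"
proof -
  let ?Q = "\<lambda>F. F \<subseteq> P \<and> Cl F \<subseteq> Cl P"
  have "?Q P" by simp
  then obtain F where F: "?Q F" and Fmin: "\<And>F'. ?Q F' \<Longrightarrow> card F \<le> card F'"
    using ex_has_least_nat[of ?Q P card] by blast
  have finF: "finite F" using F fin finite_subset by blast
  have walls: "\<exists>p e. p \<bullet> fst h = snd h \<and> e > 0 \<and> {v \<in> ball p e. v \<bullet> fst h < snd h} \<subseteq> Op P"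
    if h: "h \<in> F" for h
  proof -
    obtain c j where hcj: "h = (c, j)" by (cases h)
    let ?F' = "F - {h}"
    have "card ?F' < card F" using card_Diff1_less[OF finF h] .
    have "\<not> ?Q ?F'"
    proof
      assume "?Q ?F'"
      then have "card F \<le> card ?F'" by (rule Fmin)
      then show False using \<open>card ?F' < card F\<close> by simp
    qed
    then have "\<not> Cl ?F' \<subseteq> Cl P" using F by blast
    then obtain z where z1: "z \<in> Cl ?F'" and z2: "z \<notin> Cl P" by blast
    have "z \<notin> Cl F" using z2 F by blast
    then have zc: "z \<bullet> c > j" using z1 hcj unfolding Cl_def by force
    have x0c: "x0 \<bullet> c < j" using x0 h F hcj unfolding Op_def by force
    define t where "t = (j - x0 \<bullet> c) / (z \<bullet> c - x0 \<bullet> c)"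
    have t: "0 < t" "t < 1" using zc x0c by (simp_all add: t_def field_simps)
    define p where "p = x0 + t *\<^sub>R (z - x0)"
    have pc1: "p \<bullet> c = x0 \<bullet> c + t * (z \<bullet> c - x0 \<bullet> c)"
      by (simp add: p_def inner_add_left inner_diff_left)
    have pc2: "t * (z \<bullet> c - x0 \<bullet> c) = j - x0 \<bullet> c" using zc x0c by (simp add: t_def)
    have pc: "p \<bullet> c = j" using pc1 pc2 by simp
    have pstrict: "p \<bullet> fst h' < snd h'" if h': "h' \<in> ?F'" for h'
    proof -
      have a: "x0 \<bullet> fst h' < snd h'" using x0 h' F unfolding Op_def by blast
      have b: "z \<bullet> fst h' \<le> snd h'" using z1 h' unfolding Cl_def by blast
      have "p \<bullet> fst h' = (1 - t) * (x0 \<bullet> fst h') + t * (z \<bullet> fst h')"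
        by (simp add: p_def inner_add_left inner_diff_left algebra_simps)
      also have "\<dots> < (1 - t) * snd h' + t * snd h'"
        using a b t by (intro add_less_le_mono mult_strict_left_mono mult_left_mono) auto
      finally show ?thesis by (simp add: algebra_simps)
    qed
    define e where "e = Min (insert 1 ((\<lambda>h'. (snd h' - p \<bullet> fst h') / (norm (fst h') + 1)) ` ?F'))"
    have fin': "finite (insert 1 ((\<lambda>h'. (snd h' - p \<bullet> fst h') / (norm (fst h') + 1)) ` ?F'))"
      using finF by simp
    have np: "0 < norm x + 1" for x :: "real^2" by (simp add: add_nonneg_pos)
    have e: "e > 0" unfolding e_def using fin' pstrict np
      by (subst Min_gr_iff) (auto intro!: divide_pos_pos)
    have ele: "e \<le> (snd h' - p \<bullet> fst h') / (norm (fst h') + 1)" if "h' \<in> ?F'" for h'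
      unfolding e_def using fin' that by (intro Min_le) auto
    have sub: "{v \<in> ball p e. v \<bullet> c < j} \<subseteq> Cl P"
    proof
      fix v assume v: "v \<in> {v \<in> ball p e. v \<bullet> c < j}"
      have "v \<bullet> fst h' \<le> snd h'" if h': "h' \<in> F" for h'
      proof (cases "h' = h")
        case True then show ?thesis using v hcj by simp
      next
        case False
        then have h'F: "h' \<in> ?F'" using h' by simp
        have n: "norm (v - p) < e" using v by (simp add: dist_norm norm_minus_commute)
        have "(v - p) \<bullet> fst h' \<le> norm (v - p) * norm (fst h')"
          using Cauchy_Schwarz_ineq2[of "v - p" "fst h'"] by linarith
        also have "\<dots> \<le> e * (norm (fst h') + 1)" using n e
          by (intro mult_mono) auto
        also have "\<dots> \<le> snd h' - p \<bullet> fst h'"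
          using ele[OF h'F] np[of "fst h'"] by (metis pos_le_divide_eq)
        finally show ?thesis by (simp add: inner_diff_left)
      qed
      then have "v \<in> Cl F" unfolding Cl_def by blast
      then show "v \<in> Cl P" using F by blast
    qed
    have opn: "open {v \<in> ball p e. v \<bullet> c < j}"
    proof -
      have "{v \<in> ball p e. v \<bullet> c < j} = ball p e \<inter> {v. c \<bullet> v < j}" by (auto simp: inner_commute)
      then show ?thesis using open_Int[OF open_ball open_halfspace_lt] by metis
    qed
    have "{v \<in> ball p e. v \<bullet> c < j} \<subseteq> Op P"
      using open_sub_Cl_Op[OF nz opn sub] by blast
    then show ?thesis using pc e hcj by (intro exI[of _ p] exI[of _ e]) auto
  qed
  show ?thesis using F walls by blast
qed

context aw begin

abbreviation Pos where "Pos \<equiv> {b \<in> R. b \<bullet> xi > 0}"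

definition PA where "PA = (\<lambda>b. (-b, 0::real)) ` Pos \<union> (\<lambda>b. (b, 1)) ` Pos"
definition PK where "PK = (\<lambda>b. (-b, 0::real)) ` Pos"

lemma finPA: "finite PA" and finPK: "finite PK"
  using finR by (simp_all add: PA_def PK_def)

lemma nzPA: "\<forall>h\<in>PA. fst h \<noteq> 0" and nzPK: "\<forall>h\<in>PK. fst h \<noteq> 0"
  using nz by (auto simp: PA_def PK_def)

lemma Op_PA: "Op PA = A0 R xi"
proof (rule set_eqI)
  fix v
  have "v \<in> Op PA \<longleftrightarrow> (\<forall>b\<in>Pos. v \<bullet> (-b) < 0 \<and> v \<bullet> b < 1)" unfolding Op_def PA_def by (simp add: ball_Un) blast
  also have "\<dots> \<longleftrightarrow> v \<in> A0 R xi" unfolding A0_iff by (auto simp: inner_minus_right)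
  finally show "v \<in> Op PA \<longleftrightarrow> v \<in> A0 R xi" .
qed

lemma exit_A0:
  assumes y: "y \<notin> A0 R xi" and gen: "\<forall>c\<in>R. \<forall>j\<in>\<int>. y \<bullet> c \<noteq> j"
  shows "\<exists>c j. c \<in> R \<and> is_wall (A0 R xi) c j \<and> opp (A0 R xi) {y} (c, of_int j)"
proof -
  obtain \<epsilon> where \<epsilon>: "\<epsilon> > 0" "\<forall>t. 0 < t \<and> t \<le> \<epsilon> \<longrightarrow> t *\<^sub>R xi \<in> A0 R xi" using A0_small by blast
  have x0: "\<epsilon> *\<^sub>R xi \<in> Op PA" using \<epsilon> Op_PA by auto
  obtain F where F: "F \<subseteq> PA" "Cl F \<subseteq> Cl PA"
    and W: "\<forall>h\<in>F. \<exists>p e. p \<bullet> fst h = snd h \<and> e > 0 \<and> {v \<in> ball p e. v \<bullet> fst h < snd h} \<subseteq> Op PA"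
    using min_system[OF finPA nzPA x0] by blast
  have hR: "fst h \<in> R \<and> (\<exists>j::int. snd h = of_int j)" if "h \<in> PA" for h
    using that negR by (auto simp: PA_def intro: exI[of _ 0] exI[of _ 1])
  have "y \<notin> Cl PA"
  proof
    assume yc: "y \<in> Cl PA"
    have "y \<in> Op PA" unfolding Op_def
    proof (intro CollectI ballI)
      fix h assume h: "h \<in> PA"
      have "y \<bullet> fst h \<le> snd h" using yc h by (auto simp: Cl_def)
      moreover have "y \<bullet> fst h \<noteq> snd h" using gen hR[OF h] by force
      ultimately show "y \<bullet> fst h < snd h" by simp
    qed
    then show False using y Op_PA by simp
  qed
  then have "y \<notin> Cl F" using F by blast
  then obtain h where h: "h \<in> F" "y \<bullet> fst h > snd h" unfolding Cl_def by force
  obtain j :: int where j: "snd h = of_int j" using hR h F by blast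
  obtain p e where pe: "p \<bullet> fst h = snd h" "e > 0" "{v \<in> ball p e. v \<bullet> fst h < snd h} \<subseteq> Op PA"
    using W h by blast
  have wall: "is_wall (A0 R xi) (fst h) j" unfolding is_wall_def
    using pe j Op_PA by (intro exI[of _ p] exI[of _ e]) auto
  have "below (A0 R xi) h" unfolding below_def using h F Op_PA[symmetric] by (auto simp: Op_def)
  moreover have "above {y} h" using h by (simp add: above_def)
  ultimately have o: "opp (A0 R xi) {y} h" unfolding opp_def by blast
  have hc: "(fst h, of_int j) = h" using j by (simp add: prod_eq_iff)
  have "opp (A0 R xi) {y} (fst h, of_int j)" unfolding hc by (rule o)
  then show ?thesis using wall hR h F by blast
qed

end


lemma int_between_same:
  fixes x y :: real and m :: int
  assumes x: "of_int m < x" "x < of_int m + 1" and y: "of_int m < y" "y < of_int m + 1" and j: "j \<in> \<int>"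
  shows "(x < j \<longleftrightarrow> y < j) \<and> (x > j \<longleftrightarrow> y > j) \<and> x \<noteq> j"
proof -
  obtain n where n: "j = of_int n" using j Ints_cases by blast
  have 1: "x < of_int n \<longleftrightarrow> m + 1 \<le> n"
    if "of_int m < x" "x < of_int m + 1" for x :: real
  proof
    assume "x < of_int n" then have "of_int m < (of_int n :: real)" using that by linarith
    then show "m + 1 \<le> n" by simp
  next
    assume "m + 1 \<le> n" then have "of_int m + 1 \<le> (of_int n :: real)" by simp
    then show "x < of_int n" using that by linarith
  qed
  have 2: "x > of_int n \<longleftrightarrow> n \<le> m"
    if "of_int m < x" "x < of_int m + 1" for x :: real
  proof
    assume "x > of_int n" then have "of_int n < (of_int m + 1 :: real)" using that by linarith
    then show "n \<le> m" by linarith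
  next
    assume "n \<le> m" then have "(of_int n :: real) \<le> of_int m" by simp
    then show "x > of_int n" using that by linarith
  qed
  show ?thesis unfolding n using 1[OF x] 1[OF y] 2[OF x] 2[OF y] by auto
qed

context aw begin

lemma par_root: assumes b: "b \<in> R" and c: "c \<in> R" and d: "(vector [- b$2, b$1] :: real^2) \<bullet> c = 0"
  shows "c = b \<or> c = -b"
proof -
  define l where "l = (c \<bullet> b) / (b \<bullet> b)"
  have cl: "c = l *\<^sub>R b" using rot_perp[OF nz[OF b] d] unfolding l_def .
  then have "l = 1 \<or> l = -1" using redR[OF b] c by metis
  then show ?thesis using cl by auto
qed

lemma generic_point: assumes b: "b \<in> R"
  shows "\<exists>q. q \<bullet> b = k \<and> (\<forall>c\<in>R - {b, -b}. \<forall>j\<in>\<int>. q \<bullet> c \<noteq> j)"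
proof -
  define d :: "real^2" where "d = vector [- b$2, b$1]"
  define q0 where "q0 = (k / (b \<bullet> b)) *\<^sub>R b"
  have bb: "b \<bullet> b \<noteq> 0" using nz[OF b] by simp
  have q0b: "q0 \<bullet> b = k" using bb by (simp add: q0_def)
  have db: "d \<bullet> b = 0" unfolding d_def using rot_props by simp
  have dc: "d \<bullet> c \<noteq> 0" if "c \<in> R - {b, -b}" for c using par_root[OF b, of c] that unfolding d_def by auto
  define J where "J c = {n::int. \<bar>of_int n - q0 \<bullet> c\<bar> \<le> \<bar>d \<bullet> c\<bar>}" for c
  have finJ: "finite (J c)" for c
  proof -
    have "J c \<subseteq> {\<lfloor>q0 \<bullet> c - \<bar>d \<bullet> c\<bar>\<rfloor> .. \<lceil>q0 \<bullet> c + \<bar>d \<bullet> c\<bar>\<rceil>}"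
      unfolding J_def by (auto simp: abs_le_iff le_floor_iff ceiling_le_iff intro: floor_le_ceiling) 
         (linarith+)
    then show ?thesis using finite_subset by blast
  qed
  define Bad where "Bad = (\<Union>c\<in>R - {b, -b}. (\<lambda>n. (of_int n - q0 \<bullet> c) / (d \<bullet> c)) ` J c)"
  have finBad: "finite Bad" unfolding Bad_def using finR finJ by auto
  have "infinite ({0<..<1::real} - Bad)" using infinite_Ioo[of "0::real" 1] finBad by auto
  then obtain t where t: "t \<in> {0<..<1::real}" "t \<notin> Bad" by (metis Diff_iff finite.emptyI ex_in_conv)
  define q where "q = q0 + t *\<^sub>R d"
  have qb: "q \<bullet> b = k" using q0b db by (simp add: q_def inner_add_left)
  have "q \<bullet> c \<noteq> j" if c: "c \<in> R - {b, -b}" and j: "j \<in> \<int>" for c j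
  proof
    assume e: "q \<bullet> c = j"
    obtain n where n: "j = of_int n" using j Ints_cases by blast
    have qc: "q \<bullet> c = q0 \<bullet> c + t * (d \<bullet> c)" by (simp add: q_def inner_add_left)
    have tt: "t = (of_int n - q0 \<bullet> c) / (d \<bullet> c)" using e n qc dc[OF c] by (simp add: field_simps)
    have "of_int n - q0 \<bullet> c = t * (d \<bullet> c)" using e n qc by linarith
    then have "\<bar>of_int n - q0 \<bullet> c\<bar> = t * \<bar>d \<bullet> c\<bar>" using t by (simp add: abs_mult)
    also have "\<dots> \<le> 1 * \<bar>d \<bullet> c\<bar>" using t by (intro mult_right_mono) auto
    finally have "n \<in> J c" by (simp add: J_def)
    then have "t \<in> Bad" unfolding Bad_def using c tt by blast
    then show False using t by blast
  qed
  then show ?thesis using qb by blast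
qed

lemma ball_generic:
  assumes b: "b \<in> R" and qb: "q \<bullet> b = of_int k" and gen: "\<forall>c\<in>R - {b, -b}. \<forall>j\<in>\<int>. q \<bullet> c \<noteq> j"
  shows "\<exists>e>0. \<forall>w1 w2. w1 \<in> ball q e \<and> w2 \<in> ball q e \<and> w1 \<bullet> b > of_int k \<and> w2 \<bullet> b > of_int k \<longrightarrow>
     (\<forall>c\<in>R. \<forall>j\<in>\<int>. (w1 \<bullet> c < j \<longleftrightarrow> w2 \<bullet> c < j) \<and> (w1 \<bullet> c > j \<longleftrightarrow> w2 \<bullet> c > j) \<and> w1 \<bullet> c \<noteq> j)"
proof -
  let ?R' = "R - {b, -b}"
  define f where "f c = \<lfloor>q \<bullet> c\<rfloor>" for c
  define \<delta> where "\<delta> c = min (q \<bullet> c - of_int (f c)) (of_int (f c) + 1 - q \<bullet> c)" for c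
  have \<delta>pos: "\<delta> c > 0" if c: "c \<in> ?R'" for c
  proof -
    have "q \<bullet> c \<noteq> of_int (f c)" using gen c by auto
    moreover have "of_int (f c) \<le> q \<bullet> c" "q \<bullet> c < of_int (f c) + 1" unfolding f_def by linarith+
    ultimately show ?thesis unfolding \<delta>_def by simp
  qed
  define e where "e = Min (insert (1 / (norm b + 1)) ((\<lambda>c. \<delta> c / (norm c + 1)) ` ?R'))"
  have np: "0 < norm x + 1" for x :: "real^2" by (simp add: add_nonneg_pos)
  have fin: "finite (insert (1 / (norm b + 1)) ((\<lambda>c. \<delta> c / (norm c + 1)) ` ?R'))" using finR by simp
  have e: "e > 0" unfolding e_def using fin \<delta>pos np
    by (subst Min_gr_iff) (auto intro!: divide_pos_pos)
  have e1: "e \<le> 1 / (norm b + 1)" unfolding e_def using fin by (intro Min_le) auto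
  have e2: "e \<le> \<delta> c / (norm c + 1)" if "c \<in> ?R'" for c unfolding e_def using fin that by (intro Min_le) auto
  have close: "\<bar>w \<bullet> c - q \<bullet> c\<bar> < e * (norm c + 1)" if w: "w \<in> ball q e" for w c
  proof -
    have "\<bar>w \<bullet> c - q \<bullet> c\<bar> = \<bar>(w - q) \<bullet> c\<bar>" by (simp add: inner_diff_left)
    also have "\<dots> \<le> norm (w - q) * norm c" by (rule Cauchy_Schwarz_ineq2)
    also have "\<dots> \<le> e * norm c" using w by (intro mult_right_mono) (auto simp: dist_norm norm_minus_commute)
    also have "\<dots> < e * (norm c + 1)" using e by simp
    finally show ?thesis .
  qed
  have strip: "\<exists>m::int. \<forall>w. w \<in> ball q e \<and> w \<bullet> b > of_int k \<longrightarrow> of_int m < w \<bullet> c \<and> w \<bullet> c < of_int m + 1"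
    if c: "c \<in> R" for c
  proof (cases "c \<in> ?R'")
    case True
    show ?thesis
    proof (intro exI[of _ "f c"] allI impI)
      fix w assume w: "w \<in> ball q e \<and> w \<bullet> b > of_int k"
      have "\<bar>w \<bullet> c - q \<bullet> c\<bar> < \<delta> c"
      proof -
        have "e * (norm c + 1) \<le> \<delta> c" using e2[OF True] np[of c] by (metis pos_le_divide_eq)
        then show ?thesis using close[of w c] w by linarith
      qed
      then show "of_int (f c) < w \<bullet> c \<and> w \<bullet> c < of_int (f c) + 1" unfolding \<delta>_def by auto
    qed
  next
    case False
    then have cb: "c = b \<or> c = -b" using c by blast
    have wb: "\<bar>w \<bullet> b - of_int k\<bar> < 1" if "w \<in> ball q e" for w
    proof -
      have "e * (norm b + 1) \<le> 1" using e1 np[of b] by (metis pos_le_divide_eq)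
      then show ?thesis using close[OF that, of b] qb by linarith
    qed
    show ?thesis
    proof (cases "c = b")
      case True
      show ?thesis
      proof (intro exI[of _ k] allI impI)
        fix w assume w: "w \<in> ball q e \<and> w \<bullet> b > of_int k"
        then have "\<bar>w \<bullet> b - of_int k\<bar> < 1" using wb by blast
        then show "of_int k < w \<bullet> c \<and> w \<bullet> c < of_int k + 1" using w True by (simp add: abs_less_iff)
      qed
    next
      case False
      then have cmb: "c = -b" using cb by blast
      show ?thesis
      proof (intro exI[of _ "-k-1"] allI impI)
        fix w assume w: "w \<in> ball q e \<and> w \<bullet> b > of_int k"
        then have "\<bar>w \<bullet> b - of_int k\<bar> < 1" using wb by blast
        then show "of_int (-k-1) < w \<bullet> c \<and> w \<bullet> c < of_int (-k-1) + 1" using w cmb by (simp add: abs_less_iff)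
      qed
    qed
  qed
  have main: "\<forall>w1 w2. w1 \<in> ball q e \<and> w2 \<in> ball q e \<and> w1 \<bullet> b > of_int k \<and> w2 \<bullet> b > of_int k \<longrightarrow>
     (\<forall>c\<in>R. \<forall>j\<in>\<int>. (w1 \<bullet> c < j \<longleftrightarrow> w2 \<bullet> c < j) \<and> (w1 \<bullet> c > j \<longleftrightarrow> w2 \<bullet> c > j) \<and> w1 \<bullet> c \<noteq> j)"
  proof (intro allI impI ballI)
    fix w1 w2 c j assume w: "w1 \<in> ball q e \<and> w2 \<in> ball q e \<and> w1 \<bullet> b > of_int k \<and> w2 \<bullet> b > of_int k"
      and c: "c \<in> R" and j: "(j::real) \<in> \<int>"
    obtain m :: int where m: "\<forall>w. w \<in> ball q e \<and> w \<bullet> b > of_int k \<longrightarrow> of_int m < w \<bullet> c \<and> w \<bullet> c < of_int m + 1"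
      using strip[OF c] by blast
    have x: "of_int m < w1 \<bullet> c" "w1 \<bullet> c < of_int m + 1" using m w by blast+
    have y: "of_int m < w2 \<bullet> c" "w2 \<bullet> c < of_int m + 1" using m w by blast+
    show "(w1 \<bullet> c < j \<longleftrightarrow> w2 \<bullet> c < j) \<and> (w1 \<bullet> c > j \<longleftrightarrow> w2 \<bullet> c > j) \<and> w1 \<bullet> c \<noteq> j"
      by (rule int_between_same[OF x y j])
  qed
  show ?thesis using e main by blast
qed

end


context aw begin

lemma fin_sep: "finite {h. fst h \<in> R \<and> snd h \<in> \<int> \<and> opp {u} {v} h}"
proof -
  define N where "N = \<lceil>\<Sum>c\<in>R. \<bar>u \<bullet> c\<bar> + \<bar>v \<bullet> c\<bar>\<rceil>"
  have "{h. fst h \<in> R \<and> snd h \<in> \<int> \<and> opp {u} {v} h} \<subseteq> R \<times> (of_int ` {-N..N})"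
  proof
    fix h assume h: "h \<in> {h. fst h \<in> R \<and> snd h \<in> \<int> \<and> opp {u} {v} h}"
    obtain n where n: "snd h = of_int n" using h Ints_cases by blast
    have c: "fst h \<in> R" using h by blast
    have "\<bar>snd h\<bar> \<le> \<bar>u \<bullet> fst h\<bar> + \<bar>v \<bullet> fst h\<bar>" using h by (auto simp: opp_def below_def above_def)
    also have "\<dots> \<le> (\<Sum>c\<in>R. \<bar>u \<bullet> c\<bar> + \<bar>v \<bullet> c\<bar>)"
      using c finR by (intro member_le_sum) auto
    finally have "\<bar>of_int n\<bar> \<le> (\<Sum>c\<in>R. \<bar>u \<bullet> c\<bar> + \<bar>v \<bullet> c\<bar>)" using n by simp
    then have "\<bar>n\<bar> \<le> N" unfolding N_def by linarith
    then have "n \<in> {-N..N}" by auto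
    then show "h \<in> R \<times> (of_int ` {-N..N})" using c n by (cases h) auto
  qed
  moreover have "finite (R \<times> (of_int ` {-N..N} :: real set))" using finR by simp
  ultimately show ?thesis by (rule finite_subset)
qed

definition Dq where "Dq y g = {h. fst h \<in> R \<and> snd h \<in> \<int> \<and> opp (g ` A0 R xi) {y} h}"

lemma Dq_fin: "finite (Dq y g)"
proof -
  obtain y0 where y0: "y0 \<in> A0 R xi" using A0_ne by blast
  have "Dq y g \<subseteq> {h. fst h \<in> R \<and> snd h \<in> \<int> \<and> opp {g y0} {y} h}"
    unfolding Dq_def using y0 by (auto intro: opp_mono)
  then show ?thesis using fin_sep finite_subset by blast
qed

lemma Expr_snoc: "g \<in> Expr \<Longrightarrow> s \<in> Sg \<Longrightarrow> g \<circ> s \<in> Expr"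
proof -
  assume g: "g \<in> Expr" and s: "s \<in> Sg"
  obtain ss where ss: "set ss \<subseteq> Sg" "g = prodl ss" using g unfolding Expr_def by blast
  have e: "g \<circ> s = prodl (ss @ [s])" by (simp only: prodl_snoc ss(2))
  have st: "set (ss @ [s]) \<subseteq> Sg" using ss s by simp
  show ?thesis unfolding Expr_def mem_Collect_eq by (rule exI[of _ "ss @ [s]"]) (rule conjI[OF e st])
qed

lemma Expr_good: "g \<in> Expr \<Longrightarrow> good R g"
  unfolding Expr_def using good_prodl by blast

lemma descent:
  assumes qg: "\<forall>c\<in>R. \<forall>j\<in>\<int>. y \<bullet> c \<noteq> j"
  shows "g \<in> Expr \<Longrightarrow> \<exists>g'\<in>Expr. y \<in> g' ` A0 R xi"
proof (induction "card (Dq y g)" arbitrary: g rule: less_induct)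
  case less
  note g = less.prems
  have gg: "good R g" using Expr_good[OF g] .
  show ?case
  proof (cases "y \<in> g ` A0 R xi")
    case True then show ?thesis using g by blast
  next
    case False
    obtain z where z: "g z = y" using good_surj[OF gg] by blast
    have zA: "z \<notin> A0 R xi" using False z by blast
    have zg: "\<forall>c\<in>R. \<forall>j\<in>\<int>. z \<bullet> c \<noteq> j"
    proof (intro ballI notI)
      fix c j assume c: "c \<in> R" and j: "j \<in> \<int>" and e: "z \<bullet> c = j"
      have p: "fst (phi g (c, j)) \<in> R \<and> snd (phi g (c, j)) \<in> \<int>" using phi_in[OF gg] c j by simp
      have "y \<bullet> fst (phi g (c, j)) - snd (phi g (c, j)) = 0" using phi_side[OF gg, of z "(c, j)"] z e by simp
      then show False using qg p by force
    qed
    obtain c0 j0 where c0: "c0 \<in> R" "is_wall (A0 R xi) c0 j0" and o0: "opp (A0 R xi) {z} (c0, of_int j0)"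
      using exit_A0[OF zA zg] by blast
    let ?s = "aff_refl c0 j0" and ?h0 = "(c0, real_of_int j0)"
    have sS: "?s \<in> Sg" using c0 unfolding simple_gens_def by blast
    have gs: "good R ?s" using good_aff[OF c0(1)] .
    have g2: "g \<circ> ?s \<in> Expr" using Expr_snoc[OF g sS] .
    have h0R: "fst ?h0 \<in> R" "snd ?h0 \<in> \<int>" using c0 by auto
    have zside: "below {z} h \<or> above {z} h" if "fst h \<in> R" "snd h \<in> \<int>" for h
      using zg that by (auto simp: below_def above_def) (meson linorder_neqE_linordered_idom)
    have sub: "Dq y (g \<circ> ?s) \<subseteq> Dq y g - {phi g ?h0}"
    proof
      fix h assume h: "h \<in> Dq y (g \<circ> ?s)"
      then have hR: "fst h \<in> R" "snd h \<in> \<int>" and oh: "opp ((g \<circ> ?s) ` A0 R xi) {y} h" by (auto simp: Dq_def)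
      obtain h' where h': "fst h' \<in> R" "snd h' \<in> \<int>" "phi g h' = (fst h, snd h)"
        using phi_surj[OF gg hR] by blast
      have hh: "h = phi g h'" using h' by simp
      have im1: "(g \<circ> ?s) ` A0 R xi = g ` (?s ` A0 R xi)" by (simp add: image_comp)
      have im2: "{y} = g ` {z}" using z by simp
      have o1: "opp (?s ` A0 R xi) {z} h'" using oh unfolding im1 im2 hh opp_img[OF gg] .
      have xor: "opp (A0 R xi) {z} h' \<longleftrightarrow> (opp (A0 R xi) (?s ` A0 R xi) h' \<longleftrightarrow> \<not> opp (?s ` A0 R xi) {z} h')"
        by (rule opp_xor) (use A0_ne A0_side[OF h'(1,2)] gA0_side[OF gs h'(1,2)] zside[OF h'(1,2)] in auto)
      have notpm: "h' \<noteq> ?h0 \<and> h' \<noteq> negp ?h0"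
      proof
        show "h' \<noteq> ?h0"
        proof
          assume "h' = ?h0"
          then show False using xor o1 o0 T2[OF c0(1), of "of_int j0"] by (simp add: aff_refl_rf)
        qed
        show "h' \<noteq> negp ?h0"
        proof
          assume "h' = negp ?h0"
          then show False using xor o1 o0 T2[OF c0(1), of "of_int j0"] opp_negp by (simp add: aff_refl_rf)
        qed
      qed
      have "\<not> opp (A0 R xi) (?s ` A0 R xi) h'"
      proof
        assume "opp (A0 R xi) (?s ` A0 R xi) h'"
        then have "(fst h', snd h') = (c0, of_int j0) \<or> (fst h', snd h') = negp (c0, of_int j0)"
          using T1[OF c0(1,2) h'(1), of "snd h'"] by (simp add: aff_refl_rf)
        then show False using notpm by simp
      qed
      then have "opp (A0 R xi) {z} h'" using xor o1 by blast
      then have "opp (g ` A0 R xi) (g ` {z}) h" unfolding hh opp_img[OF gg] .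
      then have "h \<in> Dq y g" using hR im2 by (simp add: Dq_def)
      moreover have "h \<noteq> phi g ?h0" using notpm hh phi_inj[OF gg] by metis
      ultimately show "h \<in> Dq y g - {phi g ?h0}" by blast
    qed
    have inD: "phi g ?h0 \<in> Dq y g"
    proof -
      have "opp (g ` A0 R xi) (g ` {z}) (phi g ?h0)" unfolding opp_img[OF gg] by (rule o0)
      then show ?thesis using phi_in[OF gg h0R] z by (simp add: Dq_def)
    qed
    have "card (Dq y (g \<circ> ?s)) \<le> card (Dq y g - {phi g ?h0})" using sub Dq_fin by (intro card_mono) auto
    also have "\<dots> < card (Dq y g)" using inD Dq_fin by (intro card_Diff1_less)
    finally have lt: "card (Dq y (g \<circ> ?s)) < card (Dq y g)" .
    show ?thesis using less.hyps[OF lt g2] .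
  qed
qed

lemma simple_invol: "s \<in> Sg \<Longrightarrow> s \<circ> s = id"
proof -
  assume "s \<in> Sg"
  then obtain b k where bk: "s = aff_refl b k" "b \<in> R" using simple_gen_E by metis
  show "s \<circ> s = id" using rf_invol[OF nz[OF bk(2)]] bk(1) by (simp add: fun_eq_iff aff_refl_rf)
qed

lemma prodl_rev_inv: "set ss \<subseteq> Sg \<Longrightarrow> prodl ss \<circ> prodl (rev ss) = id"
proof (induction ss)
  case Nil then show ?case by (simp only: prodl_Nil rev.simps id_comp)
next
  case (Cons a ss)
  have a: "a \<in> Sg" and ss: "set ss \<subseteq> Sg" using Cons.prems by auto
  have "prodl (a # ss) \<circ> prodl (rev (a # ss)) = a \<circ> (prodl ss \<circ> prodl (rev ss)) \<circ> a"
    by (simp only: prodl_Cons rev.simps prodl_append prodl_Nil comp_id comp_assoc)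
  also have "\<dots> = a \<circ> a" using Cons.IH[OF ss] by (simp only: comp_id)
  also have "\<dots> = id" using simple_invol[OF a] .
  finally show ?case .
qed

lemma Expr_id: "id \<in> Expr"
  unfolding Expr_def mem_Collect_eq
  by (rule exI[of _ "[]"], rule conjI, simp only: prodl_Nil, simp)

lemma Expr_comp: "f \<in> Expr \<Longrightarrow> g \<in> Expr \<Longrightarrow> f \<circ> g \<in> Expr"
proof -
  assume f: "f \<in> Expr" and g: "g \<in> Expr"
  obtain s1 where s1: "set s1 \<subseteq> Sg" "f = prodl s1" using f unfolding Expr_def by blast
  obtain s2 where s2: "set s2 \<subseteq> Sg" "g = prodl s2" using g unfolding Expr_def by blast
  have e: "f \<circ> g = prodl (s1 @ s2)" by (simp only: prodl_append s1(2) s2(2))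
  have st: "set (s1 @ s2) \<subseteq> Sg" using s1 s2 by simp
  show ?thesis unfolding Expr_def mem_Collect_eq by (rule exI[of _ "s1 @ s2"]) (rule conjI[OF e st])
qed

lemma refl_expr: assumes b: "b \<in> R" shows "aff_refl b k \<in> Expr"
proof -
  obtain q where qb: "q \<bullet> b = of_int k" and qg: "\<forall>c\<in>R - {b, -b}. \<forall>j\<in>\<int>. q \<bullet> c \<noteq> j"
    using generic_point[OF b] by blast
  obtain e where e: "e > 0" and E: "\<forall>w1 w2. w1 \<in> ball q e \<and> w2 \<in> ball q e \<and> w1 \<bullet> b > of_int k \<and> w2 \<bullet> b > of_int k \<longrightarrow>
     (\<forall>c\<in>R. \<forall>j\<in>\<int>. (w1 \<bullet> c < j \<longleftrightarrow> w2 \<bullet> c < j) \<and> (w1 \<bullet> c > j \<longleftrightarrow> w2 \<bullet> c > j) \<and> w1 \<bullet> c \<noteq> j)"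
    using ball_generic[OF b qb qg] by blast
  have nb: "norm b > 0" using nz[OF b] by simp
  define q' where "q' = q + (e / (2 * norm b)) *\<^sub>R b"
  have q'ball: "q' \<in> ball q e" using e nb by (simp add: q'_def dist_norm)
  have "q' \<bullet> b = q \<bullet> b + (e / (2 * norm b)) * (b \<bullet> b)" by (simp add: q'_def inner_add_left)
  moreover have "(e / (2 * norm b)) * (b \<bullet> b) > 0" using e nb nz[OF b] by simp
  ultimately have q'b: "q' \<bullet> b > of_int k" using qb by simp
  have q'g: "\<forall>c\<in>R. \<forall>j\<in>\<int>. q' \<bullet> c \<noteq> j" using E q'ball q'b by blast
  obtain g where gE: "g \<in> Expr" and q'in: "q' \<in> g ` A0 R xi"
    using descent[OF q'g Expr_id] by blast
  have gg: "good R g" using Expr_good[OF gE] .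
  obtain ss where ss: "set ss \<subseteq> Sg" "g = prodl ss" using gE unfolding Expr_def by blast
  obtain y' where y': "y' \<in> A0 R xi" "g y' = q'" using q'in by blast
  have bR: "b \<in> R" "of_int k \<in> \<int>" using b by auto
  obtain h' where h': "fst h' \<in> R" "snd h' \<in> \<int>" "phi g h' = (b, of_int k)"
    using phi_surj[OF gg bR] by blast
  obtain k'' :: int where k'': "snd h' = of_int k''" using h'(2) Ints_cases by blast
  obtain p' where p': "g p' = q" using good_surj[OF gg] by blast
  have "g p' \<bullet> fst (phi g h') - snd (phi g h') = p' \<bullet> fst h' - snd h'" by (rule phi_side[OF gg])
  then have p'b: "p' \<bullet> fst h' = of_int k''" using p' qb h'(3) k'' by simp
  have half: "{v \<in> ball p' e. v \<bullet> fst h' > of_int k''} \<subseteq> A0 R xi"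
  proof
    fix v assume v: "v \<in> {v \<in> ball p' e. v \<bullet> fst h' > of_int k''}"
    have gv: "g v \<in> ball q e" using v good_dist[OF gg, of p' v] p' by simp
    have "(g v \<bullet> fst (phi g h') > snd (phi g h')) = (v \<bullet> fst h' > snd h')" by (rule phi_gt[OF gg])
    then have gvb: "g v \<bullet> b > of_int k" using v h'(3) k'' by simp
    have same: "(g v \<bullet> fst (phi g (c, j)) > snd (phi g (c, j)) \<longleftrightarrow> q' \<bullet> fst (phi g (c, j)) > snd (phi g (c, j))) \<and>
                (g v \<bullet> fst (phi g (c, j)) < snd (phi g (c, j)) \<longleftrightarrow> q' \<bullet> fst (phi g (c, j)) < snd (phi g (c, j)))"
      if c: "c \<in> R" and j: "j \<in> \<int>" for c j
    proof -
      have p: "fst (phi g (c, j)) \<in> R \<and> snd (phi g (c, j)) \<in> \<int>" using phi_in[OF gg] c j by simp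
      then show ?thesis using E gv q'ball gvb q'b by blast
    qed
    show "v \<in> A0 R xi" unfolding A0_iff
    proof (intro ballI impI conjI)
      fix c assume c: "c \<in> R" and cp: "c \<bullet> xi > 0"
      have y1: "0 < y' \<bullet> c" "y' \<bullet> c < 1" using y' c cp A0_iff by auto
      have "(g v \<bullet> fst (phi g (c, 0)) > snd (phi g (c, 0))) = (v \<bullet> c > 0)" using phi_gt[OF gg, where v=v and h="(c, 0)"] by simp
      moreover have "(q' \<bullet> fst (phi g (c, 0)) > snd (phi g (c, 0))) = (y' \<bullet> c > 0)" using phi_gt[OF gg, where v=y' and h="(c, 0)"] y' by simp
      ultimately show "0 < v \<bullet> c" using same[OF c, of 0] y1 by simp
      have "(g v \<bullet> fst (phi g (c, 1)) < snd (phi g (c, 1))) = (v \<bullet> c < 1)" using phi_lt[OF gg, where v=v and h="(c, 1)"] by simp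
      moreover have "(q' \<bullet> fst (phi g (c, 1)) < snd (phi g (c, 1))) = (y' \<bullet> c < 1)" using phi_lt[OF gg, where v=y' and h="(c, 1)"] y' by simp
      ultimately show "v \<bullet> c < 1" using same[OF c, of 1] y1 by simp
    qed
  qed
  have wall: "is_wall (A0 R xi) (fst h') k''" unfolding is_wall_def
    using p'b e half by blast
  let ?s = "aff_refl (fst h') k''"
  have sS: "?s \<in> Sg" using wall h'(1) unfolding simple_gens_def by blast
  have hh': "h' = (fst h', of_int k'')" using k'' by (simp add: prod_eq_iff)
  have c1: "g \<circ> ?s = aff_refl b k \<circ> g"
    using conj[OF gg, of h'] h'(3) k'' by (simp add: rfp_def aff_refl_rf)
  have "aff_refl b k = aff_refl b k \<circ> (g \<circ> prodl (rev ss))"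
    using prodl_rev_inv[OF ss(1)] ss(2) by simp
  also have "\<dots> = g \<circ> ?s \<circ> prodl (rev ss)" using c1 by (simp add: comp_assoc)
  finally have e1: "aff_refl b k = g \<circ> ?s \<circ> prodl (rev ss)" .
  have "prodl (rev ss) \<in> Expr" using ss(1) unfolding Expr_def mem_Collect_eq
    by (intro exI[of _ "rev ss"]) simp
  moreover have "?s \<in> Expr" using Expr_snoc[OF _ sS, of id] unfolding Expr_def
    by (metis (mono_tags, lifting) empty_subsetI list.set(1) mem_Collect_eq prodl_Nil id_comp)
  ultimately show ?thesis unfolding e1 using gE Expr_comp by blast
qed

lemma affW_Expr: "w \<in> affW R \<Longrightarrow> w \<in> Expr"
  unfolding affW_def
proof (induction rule: gen_by.induct)
  case gen_id
  show ?case by (rule Expr_id)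
next
  case (gen_step s g)
  then obtain b k where "s = aff_refl b k" "b \<in> R" by blast
  then show ?case using refl_expr Expr_comp gen_step.IH by blast
qed

end


context aw begin

lemma Op_PK: "Op PK = {v. \<forall>b\<in>Pos. v \<bullet> b > 0}"
  unfolding Op_def PK_def by (auto simp: inner_minus_right)

lemma cone_wall:
  assumes c: "c \<in> R" and pe: "p \<bullet> c = 0" "e > 0" and half: "{v \<in> ball p e. v \<bullet> c < 0} \<subseteq> Op PK"
  shows "is_wall (A0 R xi) c 0"
proof -
  define N where "N = (\<Sum>b\<in>R. norm b) + 1"
  have Npos: "N > 0" unfolding N_def by (simp add: add_nonneg_pos sum_nonneg)
  have bN: "norm b \<le> N" if "b \<in> R" for b
  proof -
    have "norm b \<le> (\<Sum>b\<in>R. norm b)" using that finR by (intro member_le_sum) auto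
    then show ?thesis unfolding N_def by simp
  qed
  define l where "l = 1 / ((norm p + e + 1) * N)"
  have lpos: "l > 0" using Npos pe by (simp add: l_def add_nonneg_pos)
  have "{v \<in> ball (l *\<^sub>R p) (l * e). v \<bullet> c < 0} \<subseteq> A0 R xi"
  proof
    fix v assume v: "v \<in> {v \<in> ball (l *\<^sub>R p) (l * e). v \<bullet> c < 0}"
    define u where "u = (1 / l) *\<^sub>R v"
    have vu: "v = l *\<^sub>R u" using lpos by (simp add: u_def)
    have "dist p u = (1 / l) * dist (l *\<^sub>R p) v"
    proof -
      have "p - u = (1 / l) *\<^sub>R (l *\<^sub>R p - v)" using lpos by (simp add: u_def algebra_simps)
      then show ?thesis using lpos by (simp add: dist_norm)
    qed
    also have "\<dots> < (1 / l) * (l * e)" using v lpos by (intro mult_strict_left_mono) auto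
    finally have "dist p u < e" using lpos by simp
    moreover have "u \<bullet> c < 0" using v lpos by (simp add: u_def divide_neg_pos)
    ultimately have "u \<in> Op PK" using half by auto
    then have upos: "\<forall>b\<in>Pos. u \<bullet> b > 0" unfolding Op_PK by simp
    have nv: "norm v < l * (norm p + e)"
    proof -
      have "norm v \<le> norm (l *\<^sub>R p) + norm (v - l *\<^sub>R p)" using norm_triangle_ineq[of "l *\<^sub>R p" "v - l *\<^sub>R p"] by simp
      also have "norm (v - l *\<^sub>R p) < l * e" using v by (simp add: dist_norm norm_minus_commute)
      finally show ?thesis using lpos by (simp add: algebra_simps)
    qed
    show "v \<in> A0 R xi" unfolding A0_iff
    proof (intro ballI impI conjI)
      fix b assume b: "b \<in> R" and bp: "b \<bullet> xi > 0"
      show "0 < v \<bullet> b" using upos b bp lpos by (simp add: vu)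
      have "v \<bullet> b \<le> norm v * norm b" using Cauchy_Schwarz_ineq2[of v b] by linarith
      also have "\<dots> \<le> norm v * N" using bN[OF b] by (intro mult_left_mono) auto
      also have "\<dots> < l * (norm p + e) * N" using nv Npos by (intro mult_strict_right_mono) auto
      also have "\<dots> = (norm p + e) * (N / ((norm p + e + 1) * N))" by (simp add: l_def)
      also have "\<dots> = (norm p + e) / (norm p + e + 1)" using Npos by simp
      also have "\<dots> < 1" using pe by (simp add: add_nonneg_pos)
      finally show "v \<bullet> b < 1" .
    qed
  qed
  then have hb: "{v \<in> ball (l *\<^sub>R p) (l * e). v \<bullet> c < of_int 0} \<subseteq> A0 R xi" by simp
  have pc: "(l *\<^sub>R p) \<bullet> c = of_int 0" using pe by simp
  have el: "l * e > 0" using lpos pe by simp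
  show ?thesis unfolding is_wall_def
    by (rule exI[of _ "l *\<^sub>R p"], rule exI[of _ "l * e"]) (intro conjI disjI1 pc el hb)
qed

lemma main_core:
  assumes w: "w \<in> affW R" and a: "a \<in> R"
    and side: "\<forall>y\<in>A0 R xi. w y \<bullet> a > w 0 \<bullet> a" and ex: "\<exists>x\<in>A0 R xi. x \<bullet> a > w 0 \<bullet> a"
  shows "\<exists>u\<in>W0 R xi. clen R xi (w \<circ> u) > clen R xi w"
proof (rule ccontr)
  assume H: "\<not> (\<exists>u\<in>W0 R xi. clen R xi (w \<circ> u) > clen R xi w)"
  have wE: "w \<in> Expr" using affW_Expr[OF w] .
  have gw: "good R w" using Expr_good[OF wE] .
  let ?L = "lin w"
  have xiK: "xi \<in> Op PK" unfolding Op_PK by (auto simp: inner_commute)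
  obtain F where F: "F \<subseteq> PK" "Cl F \<subseteq> Cl PK"
    and W: "\<forall>h\<in>F. \<exists>p e. p \<bullet> fst h = snd h \<and> e > 0 \<and> {v \<in> ball p e. v \<bullet> fst h < snd h} \<subseteq> Op PK"
    using min_system[OF finPK nzPK xiK] by blast
  obtain x where x: "x \<in> A0 R xi" "x \<bullet> a > w 0 \<bullet> a" using ex by blast
  obtain z where z: "?L z = x - w 0" using orthogonal_transformation_surj[OF good_orth[OF gw]] by (metis surjD)
  have zpos: "z \<bullet> fst h > 0" if h: "h \<in> F" for h
  proof -
    obtain b where b: "b \<in> R" "b \<bullet> xi > 0" "h = (-b, 0)" using h F unfolding PK_def by blast
    let ?c = "-b"
    have cR: "?c \<in> R" using negR[OF b(1)] .
    obtain p e where pe0: "p \<bullet> fst h = snd h" "e > 0" "{v \<in> ball p e. v \<bullet> fst h < snd h} \<subseteq> Op PK"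
      using W h by blast
    have pe: "p \<bullet> ?c = 0" "e > 0" "{v \<in> ball p e. v \<bullet> ?c < 0} \<subseteq> Op PK" using pe0 b(3) by simp_all
    have wall: "is_wall (A0 R xi) ?c 0" using cone_wall[OF cR pe] .
    let ?s = "aff_refl ?c 0"
    have sS: "?s \<in> Sg" using wall cR unfolding simple_gens_def by blast
    have s1: "?s \<in> {aff_refl b 0 | b. b \<in> R \<and> is_wall (A0 R xi) b 0}" using wall cR by blast
    have "?s \<circ> id \<in> gen_by {aff_refl b 0 | b. b \<in> R \<and> is_wall (A0 R xi) b 0}"
      by (rule gen_by.gen_step[OF s1 gen_by.gen_id])
    then have sW: "?s \<in> W0 R xi" unfolding W0_def by (simp only: comp_id)
    have le: "clen R xi (w \<circ> ?s) \<le> clen R xi w" using H sW by (meson not_le)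
    have wsE: "w \<circ> ?s \<in> Expr" using Expr_snoc[OF wE sS] .
    obtain ss where ss: "set ss \<subseteq> Sg" "w = prodl ss" using wE unfolding Expr_def by blast
    have fx: "finite (Sx w)" using Sx_bound[OF ss(1)] ss(2) by simp
    have inS: "phi w (?c, of_int 0) \<in> Sx w"
    proof (rule ccontr)
      assume "phi w (?c, of_int 0) \<notin> Sx w"
      then have "card (Sx (w \<circ> ?s)) = card (Sx w) + 2" using toggle_card(1)[OF gw fx cR wall] by blast
      then show False using clen_eq[OF wE] clen_eq[OF wsE] le by simp
    qed
    then have o: "opp (A0 R xi) (w ` A0 R xi) (phi w (?c, 0))" by (simp add: Sx_def)
    have "\<forall>y\<in>A0 R xi. y \<bullet> (-b) < 0" using b A0_iff by (auto simp: inner_minus_right)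
    then have "below (A0 R xi) (?c, 0)" by (simp add: below_def)
    then have "below (w ` A0 R xi) (phi w (?c, 0))" using below_img[OF gw] by blast
    moreover have ne: "w ` A0 R xi \<noteq> {}" using A0_ne by simp
    ultimately have "above (A0 R xi) (phi w (?c, 0))"
      using o below_above_ne[OF ne, of "phi w (?c, 0)"] unfolding opp_def by blast
    then have "x \<bullet> ?L ?c > w 0 \<bullet> ?L ?c" using x(1) by (simp add: above_def phi_def)
    then have "?L z \<bullet> ?L ?c > 0" using z by (simp add: inner_diff_left)
    then show ?thesis using good_inner[OF gw] b(3) by simp
  qed
  have "-z \<in> Cl F" unfolding Cl_def
  proof (intro CollectI ballI)
    fix h assume h: "h \<in> F"
    have "snd h = 0" using h F unfolding PK_def by auto
    then show "(-z) \<bullet> fst h \<le> snd h" using zpos[OF h] by simp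
  qed
  then have zK: "-z \<in> Cl PK" using F by blast
  obtain a' where a': "a' \<in> R" "?L a' = a" using good_img[OF gw] a by (metis imageE)
  obtain \<epsilon> where \<epsilon>: "\<epsilon> > 0" "\<forall>t. 0 < t \<and> t \<le> \<epsilon> \<longrightarrow> t *\<^sub>R xi \<in> A0 R xi" using A0_small by blast
  have eA: "\<epsilon> *\<^sub>R xi \<in> A0 R xi" using \<epsilon> by auto
  have li: "lin w (\<epsilon> *\<^sub>R xi) \<bullet> a = (\<epsilon> *\<^sub>R xi) \<bullet> a'"
    using good_inner[OF gw, of "\<epsilon> *\<^sub>R xi" a'] a'(2) by simp
  have "w (\<epsilon> *\<^sub>R xi) \<bullet> a - w 0 \<bullet> a = (\<epsilon> *\<^sub>R xi) \<bullet> a'"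
    using g_decomp[of w "\<epsilon> *\<^sub>R xi"] li by (simp only: inner_add_left)
  moreover have "w (\<epsilon> *\<^sub>R xi) \<bullet> a > w 0 \<bullet> a" using side eA by blast
  ultimately have "(\<epsilon> *\<^sub>R xi) \<bullet> a' > 0" by linarith
  then have a'pos: "a' \<bullet> xi > 0" using \<epsilon> by (simp add: inner_commute zero_less_mult_iff)
  have mem: "(-a', 0) \<in> PK" unfolding PK_def using a'(1) a'pos by (intro image_eqI[of _ _ a']) auto
  have "\<forall>h\<in>PK. (-z) \<bullet> fst h \<le> snd h" using zK by (simp add: Cl_def)
  then have "(-z) \<bullet> fst (-a', 0::real) \<le> snd (-a', 0::real)" using mem by blast
  then have "(-z) \<bullet> (-a') \<le> 0" by simp
  then have "z \<bullet> a' \<le> 0" by simp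
  moreover have "z \<bullet> a' = (x - w 0) \<bullet> a" using good_inner[OF gw, of z a'] z a' by simp
  ultimately show False using x(2) by (simp add: inner_diff_left)
qed

end


theorem lemma4p39:
  fixes R :: "(real^2) set" and xi :: "real^2" and w :: "real^2 \<Rightarrow> real^2"
    and a :: "real^2" and c :: int
  assumes "root_system R" and "reduced_rs R" and "irreducible_rs R"
    and "\<forall>b\<in>R. b \<bullet> xi \<noteq> 0"
    and "w \<in> affW R"
    and "a \<in> R"
    and "A0 R xi \<subseteq> strip a c"
    and "w ` A0 R xi \<subseteq> strip a c"
  shows "\<not> (\<forall>u\<in>W0 R xi. clen R xi (w \<circ> u) \<le> clen R xi w)"
proof -
  interpret aw R xi using assms(1,2,4) by unfold_locales
  note wW = assms(5) and aR = assms(6) and s1 = assms(7) and s2 = assms(8)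
  have wE: "w \<in> Expr" using affW_Expr[OF wW] .
  have gw: "good R w" using Expr_good[OF wE] .
  let ?p = "w 0"
  have pint: "?p \<bullet> a \<in> \<int>" using good_int[OF gw aR] .
  obtain \<epsilon> where \<epsilon>: "\<epsilon> > 0" "\<forall>t. 0 < t \<and> t \<le> \<epsilon> \<longrightarrow> t *\<^sub>R xi \<in> A0 R xi" using A0_small by blast
  define m where "m = \<bar>lin w xi \<bullet> a\<bar> + 1"
  have m: "m > 0" by (simp add: m_def add_nonneg_pos)
  have wt: "w (t *\<^sub>R xi) \<bullet> a = t * (lin w xi \<bullet> a) + ?p \<bullet> a" for t
  proof -
    have "w (t *\<^sub>R xi) = lin w (t *\<^sub>R xi) + ?p" by (rule g_decomp)
    moreover have "lin w (t *\<^sub>R xi) = t *\<^sub>R lin w xi" using linear_scale[OF good_lin[OF gw]] by blast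
    ultimately show ?thesis by (simp add: inner_add_left)
  qed
  have instrip: "of_int c < w (t *\<^sub>R xi) \<bullet> a \<and> w (t *\<^sub>R xi) \<bullet> a < of_int c + 1" if "0 < t" "t \<le> \<epsilon>" for t
    using \<epsilon>(2) that s2 by (auto simp: strip_def)
  have small: "\<bar>t * (lin w xi \<bullet> a)\<bar> < d" if "0 < t" "t \<le> d / m" "d > 0" for t d
  proof -
    have "\<bar>t * (lin w xi \<bullet> a)\<bar> = t * \<bar>lin w xi \<bullet> a\<bar>" using that by (simp add: abs_mult)
    also have "\<dots> < t * m" using that by (simp add: m_def)
    also have "\<dots> \<le> d / m * m" using that m by (intro mult_right_mono) auto
    also have "\<dots> = d" using m by simp
    finally show ?thesis .
  qed
  have lo: "of_int c \<le> ?p \<bullet> a"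
  proof (rule ccontr)
    assume "\<not> of_int c \<le> ?p \<bullet> a"
    then have d: "of_int c - ?p \<bullet> a > 0" by simp
    define t where "t = min \<epsilon> ((of_int c - ?p \<bullet> a) / m)"
    have t: "0 < t" "t \<le> \<epsilon>" "t \<le> (of_int c - ?p \<bullet> a) / m" using \<epsilon> d m by (auto simp: t_def)
    have "\<bar>t * (lin w xi \<bullet> a)\<bar> < of_int c - ?p \<bullet> a" using small[OF t(1) t(3) d] .
    then show False using instrip[OF t(1,2)] wt[of t] by linarith
  qed
  have hi: "?p \<bullet> a \<le> of_int c + 1"
  proof (rule ccontr)
    assume "\<not> ?p \<bullet> a \<le> of_int c + 1"
    then have d: "?p \<bullet> a - (of_int c + 1) > 0" by simp
    define t where "t = min \<epsilon> ((?p \<bullet> a - (of_int c + 1)) / m)"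
    have t: "0 < t" "t \<le> \<epsilon>" "t \<le> (?p \<bullet> a - (of_int c + 1)) / m" using \<epsilon> d m by (auto simp: t_def)
    have "\<bar>t * (lin w xi \<bullet> a)\<bar> < ?p \<bullet> a - (of_int c + 1)" using small[OF t(1) t(3) d] .
    then show False using instrip[OF t(1,2)] wt[of t] by linarith
  qed
  obtain n where n: "?p \<bullet> a = of_int n" using pint Ints_cases by blast
  have "n = c \<or> n = c + 1" using lo hi n by linarith
  then have "\<exists>u\<in>W0 R xi. clen R xi (w \<circ> u) > clen R xi w"
  proof
    assume nc: "n = c"
    show ?thesis
    proof (rule main_core[OF wW aR])
      show "\<forall>y\<in>A0 R xi. w y \<bullet> a > w 0 \<bullet> a" using s2 n nc by (auto simp: strip_def)
      obtain x where x: "x \<in> A0 R xi" using A0_ne by blast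
      then have "x \<bullet> a > of_int c" using s1 by (auto simp: strip_def)
      then have "x \<bullet> a > w 0 \<bullet> a" using n nc by simp
      then show "\<exists>x\<in>A0 R xi. x \<bullet> a > w 0 \<bullet> a" using x by blast
    qed
  next
    assume nc: "n = c + 1"
    show ?thesis
    proof (rule main_core[OF wW negR[OF aR]])
      show "\<forall>y\<in>A0 R xi. w y \<bullet> (-a) > w 0 \<bullet> (-a)" using s2 n nc by (auto simp: strip_def)
      obtain x where x: "x \<in> A0 R xi" using A0_ne by blast
      then have "x \<bullet> a < of_int c + 1" using s1 by (auto simp: strip_def)
      then have "x \<bullet> (-a) > w 0 \<bullet> (-a)" using n nc by simp
      then show "\<exists>x\<in>A0 R xi. x \<bullet> (-a) > w 0 \<bullet> (-a)" using x by blast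
    qed
  qed
  then show ?thesis by (meson not_le)
qed


end
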